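(* Let $k$ be a field of characteristic zero and $m$ a positive integer. Let $D_m = k_{+}\{x\}/[x^m]$ and let $\bar{x}$ denote the image of $x$ in $D_m$. Let $V_m$ be the $k$-vector space with basis $\{\xi_i^l, \eta_i^l : l = 0,\dots,m-2,\ i\in\mathbb{Z}_{\geqslant 0}\}$, and let $\Lambda_0(V_m)$ be the even part of the Grassmann algebra of $V_m$ without unity, equipped with the derivation determined by $(\xi_i^l)' = \xi_{i+1}^l$, $(\eta_i^l)' = \eta_{i+1}^l$. Then there is a homomorphism of differential algebras $\varphi_m\colon D_m\to\Lambda_0(V_m)$ with $\varphi_m(\bar{x}) = \sum_{l=0}^{m-2}\xi_0^l\wedge\eta_0^l$, and $\varphi_m$ is injective.
   Context: $k\{x\}$ denotes the differential polynomial algebra in one indeterminate: the polynomial algebra $k[x_0,x_1,x_2,\dots]$ (with $x = x_0$) with the $k$-linear derivation satisfying $x_n' = x_{n+1}$. $k_{+}\{x\}$ is the subalgebra (without unity) of differential polynomials with zero constant term. A differential ideal is an ideal $I$ with $I'\subseteq I$; $[x^m]$ denotes the differential ideal of $k_{+}\{x\}$ generated by $x^m$. The Grassmann algebra $\Lambda(V_m)$ is taken without unity (i.e. it is the span of exterior products of positive degree), $\Lambda_0(V_m)$ is its component of (positive) even degree, and the derivation on $\Lambda(V_m)$ is the ordinary (not super) derivation extending the given action on basis vectors by the Leibniz rule, i.e. $(u_1\wedge\cdots\wedge u_n)' = \sum_{j} u_1\wedge\cdots\wedge u_j'\wedge\cdots\wedge u_n$; $\Lambda_0(V_m)$ is closed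 under it. *)

theory Defs
  imports "HOL-Library.Poly_Mapping" "HOL-Library.Product_Lexorder"
begin

text \<open>k{x} = k[x_0,x_1,...]: a monomial is a finitely supported exponent vector nat =>0 nat,
  a polynomial a finitely supported coefficient function on monomials.\<close>

type_synonym 'k dpoly = "(nat \<Rightarrow>\<^sub>0 nat) \<Rightarrow>\<^sub>0 'k"

definition dvar :: "nat \<Rightarrow> 'k::comm_ring_1 dpoly" where
  "dvar n = Poly_Mapping.single (Poly_Mapping.single n 1) 1"

definition dscal :: "'k::comm_ring_1 \<Rightarrow> 'k dpoly \<Rightarrow> 'k dpoly" where
  "dscal c p = Poly_Mapping.single 0 c * p"

definition kplus :: "'k::comm_ring_1 dpoly set" where
  "kplus = {p. Poly_Mapping.lookup p 0 = 0}"

text \<open>the k-linear derivation with x_n' = x_(n+1)\<close>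
definition dderiv :: "'k::comm_ring_1 dpoly \<Rightarrow> 'k dpoly" where
  "dderiv p = (\<Sum>\<mu>\<in>Poly_Mapping.keys p. \<Sum>i\<in>Poly_Mapping.keys \<mu>.
      Poly_Mapping.single (\<mu> - Poly_Mapping.single i 1 + Poly_Mapping.single (Suc i) 1)
        (Poly_Mapping.lookup p \<mu> * of_nat (Poly_Mapping.lookup \<mu> i)))"

definition diff_ideal_gen :: "nat \<Rightarrow> 'k::comm_ring_1 dpoly set" where
  "diff_ideal_gen m = \<Inter>{I. I \<subseteq> kplus \<and> dvar 0 ^ m \<in> I \<and> 0 \<in> I
      \<and> (\<forall>p\<in>I. \<forall>q\<in>I. p + q \<in> I)
      \<and> (\<forall>c. \<forall>p\<in>I. dscal c p \<in> I)
      \<and> (\<forall>p\<in>I. \<forall>q\<in>kplus. q * p \<in> I)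
      \<and> (\<forall>p\<in>I. dderiv p \<in> I)}"

text \<open>An element of the Grassmann algebra over a vector space with linearly ordered basis 'a
  is a finitely supported combination of the basis monomials e_S = u_s1 /\ ... /\ u_sn,
  S = {s1 < ... < sn} finite.\<close>

definition perm_sign :: "'a::linorder list \<Rightarrow> 'k::comm_ring_1" where
  "perm_sign xs = (-1) ^ card {(i, j). i < j \<and> j < length xs \<and> xs ! j < xs ! i}"

text \<open>c * (u_x1 /\ ... /\ u_xn) for an arbitrary list of basis vectors\<close>
definition ext_term :: "'k::comm_ring_1 \<Rightarrow> 'a::linorder list \<Rightarrow> ('a set \<Rightarrow>\<^sub>0 'k)" where
  "ext_term c xs = (if distinct xs then Poly_Mapping.single (set xs) (c * perm_sign xs) else 0)"

definition gscal :: "'k::comm_ring_1 \<Rightarrow> ('a set \<Rightarrow>\<^sub>0 'k) \<Rightarrow> ('a set \<Rightarrow>\<^sub>0 'k)" where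
  "gscal c p = Poly_Mapping.map (\<lambda>a. c * a) p"

definition wedge :: "('a::linorder set \<Rightarrow>\<^sub>0 'k::comm_ring_1) \<Rightarrow> ('a set \<Rightarrow>\<^sub>0 'k) \<Rightarrow> ('a set \<Rightarrow>\<^sub>0 'k)" where
  "wedge p q = (\<Sum>S\<in>Poly_Mapping.keys p. \<Sum>T\<in>Poly_Mapping.keys q.
      ext_term (Poly_Mapping.lookup p S * Poly_Mapping.lookup q T) (sorted_list_of_set S @ sorted_list_of_set T))"

text \<open>ordinary (non-super) derivation induced by a map sh on basis vectors:
  (u_1 /\ ... /\ u_n)' = sum_j u_1 /\ ... /\ sh u_j /\ ... /\ u_n\<close>
definition gderiv :: "('a::linorder \<Rightarrow> 'a) \<Rightarrow> ('a set \<Rightarrow>\<^sub>0 'k::comm_ring_1) \<Rightarrow> ('a set \<Rightarrow>\<^sub>0 'k)" where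
  "gderiv sh p = (\<Sum>S\<in>Poly_Mapping.keys p. \<Sum>j<card S.
      ext_term (Poly_Mapping.lookup p S) ((sorted_list_of_set S)[j := sh (sorted_list_of_set S ! j)]))"

text \<open>Basis index (l, i, False) stands for xi_i^l and (l, i, True) for eta_i^l.\<close>
type_synonym gidx = "nat \<times> nat \<times> bool"
type_synonym 'k grass = "gidx set \<Rightarrow>\<^sub>0 'k"

definition xi :: "nat \<Rightarrow> nat \<Rightarrow> gidx" where "xi l i = (l, i, False)"
definition eta :: "nat \<Rightarrow> nat \<Rightarrow> gidx" where "eta l i = (l, i, True)"

definition shift :: "gidx \<Rightarrow> gidx" where "shift = (\<lambda>(l, i, b). (l, Suc i, b))"

definition basis_V :: "nat \<Rightarrow> gidx set" where
  "basis_V m = {(l, i, b). Suc l < m}"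

definition gen :: "gidx \<Rightarrow> 'k::comm_ring_1 grass" where
  "gen a = Poly_Mapping.single {a} 1"

definition Lambda0 :: "nat \<Rightarrow> 'k::comm_ring_1 grass set" where
  "Lambda0 m = {p. \<forall>S\<in>Poly_Mapping.keys p. finite S \<and> S \<subseteq> basis_V m \<and> even (card S) \<and> S \<noteq> {}}"

definition omega :: "nat \<Rightarrow> 'k::comm_ring_1 grass" where
  "omega m = (\<Sum>l<m - 1. wedge (gen (xi l 0)) (gen (eta l 0)))"

end

theory Submission
  imports Defs "HOL-Library.FuncSet"
begin

lemma pm_expand: "(p::'a \<Rightarrow>\<^sub>0 'b::comm_monoid_add) = (\<Sum>k\<in>Poly_Mapping.keys p. Poly_Mapping.single k (Poly_Mapping.lookup p k))"
proof (rule poly_mapping_eqI)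
  fix x
  have "Poly_Mapping.lookup (\<Sum>k\<in>Poly_Mapping.keys p. Poly_Mapping.single k (Poly_Mapping.lookup p k)) x
      = (\<Sum>k\<in>Poly_Mapping.keys p. (Poly_Mapping.lookup p k when k = x))"
    by (simp add: lookup_sum lookup_single)
  also have "\<dots> = Poly_Mapping.lookup p x"
    by (cases "x \<in> Poly_Mapping.keys p") (auto simp: when_def in_keys_iff)
  finally show "Poly_Mapping.lookup p x = Poly_Mapping.lookup (\<Sum>k\<in>Poly_Mapping.keys p. Poly_Mapping.single k (Poly_Mapping.lookup p k)) x" by simp
qed

lemma pm_induct_keys[case_names zero single add]:
  assumes "P 0" "\<And>k a. k \<in> Poly_Mapping.keys p \<Longrightarrow> P (Poly_Mapping.single k a)"
    "\<And>q r. P q \<Longrightarrow> P r \<Longrightarrow> P (q + r)"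
  shows "P (p::'a \<Rightarrow>\<^sub>0 'b::comm_monoid_add)"
proof -
  have "\<And>A. finite A \<Longrightarrow> A \<subseteq> Poly_Mapping.keys p \<Longrightarrow> P (\<Sum>k\<in>A. Poly_Mapping.single k (Poly_Mapping.lookup p k))"
  proof -
    fix A :: "'a set" assume "finite A" "A \<subseteq> Poly_Mapping.keys p"
    then show "P (\<Sum>k\<in>A. Poly_Mapping.single k (Poly_Mapping.lookup p k))"
      by (induction A rule: finite_induct) (auto intro: assms)
  qed
  then show ?thesis by (subst pm_expand) simp
qed

lemma sum_keys_superset:
  assumes "finite A" "Poly_Mapping.keys p \<subseteq> A" "\<And>k. f k 0 = 0"
  shows "(\<Sum>k\<in>Poly_Mapping.keys p. f k (Poly_Mapping.lookup p k)) = (\<Sum>k\<in>A. f k (Poly_Mapping.lookup p k))"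
  by (rule sum.mono_neutral_left) (use assms in \<open>auto simp: in_keys_iff\<close>)

lemma lext_add:
  assumes "\<And>k. f k 0 = 0" "\<And>k a b. f k (a+b) = f k a + f k b"
  shows "(\<Sum>k\<in>Poly_Mapping.keys (p+q). f k (Poly_Mapping.lookup (p+q) k)) = (\<Sum>k\<in>Poly_Mapping.keys p. f k (Poly_Mapping.lookup p k)) + (\<Sum>k\<in>Poly_Mapping.keys q. f k (Poly_Mapping.lookup q k))"
  by (rule setsum_keys_plus_distrib) (use assms in auto)

lemma lext_single:
  assumes "f k 0 = 0"
  shows "(\<Sum>j\<in>Poly_Mapping.keys (Poly_Mapping.single k a). f j (Poly_Mapping.lookup (Poly_Mapping.single k a) j)) = f k a"
  using assms by (cases "a = 0") auto

section \<open>Inversions\<close>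

definition inv :: "'a::linorder list \<Rightarrow> nat" where
  "inv xs = card {(i, j). i < j \<and> j < length xs \<and> xs ! j < xs ! i}"

definition cr :: "'a::linorder list \<Rightarrow> 'a list \<Rightarrow> nat" where
  "cr xs ys = card {(i, j). i < length xs \<and> j < length ys \<and> ys ! j < xs ! i}"

definition crV :: "'a::linorder set \<Rightarrow> 'a set \<Rightarrow> nat" where
  "crV X Y = card {(x, y). x \<in> X \<and> y \<in> Y \<and> y < x}"

lemma perm_sign_inv: "perm_sign xs = (-1) ^ inv xs"
  by (simp add: perm_sign_def inv_def)

lemma inv_append: "inv (xs @ ys) = inv xs + inv ys + cr xs ys"
proof -
  let ?n = "length xs"
  define A where "A = {(i, j). i < j \<and> j < length xs \<and> xs ! j < xs ! i}"
  define B where "B = {(i, j). i < j \<and> j < length ys \<and> ys ! j < ys ! i}"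
  define C where "C = {(i,j). i < length xs \<and> j < length ys \<and> ys!j < xs!i}"
  let ?f = "\<lambda>(i,j). (i+?n, j+?n)" and ?g = "\<lambda>(i::nat,j). (i, j+?n)"
  have fA: "finite A" by (rule finite_subset[of _ "{..<length xs} \<times> {..<length xs}"]) (auto simp: A_def)
  have fB: "finite B" by (rule finite_subset[of _ "{..<length ys} \<times> {..<length ys}"]) (auto simp: B_def)
  have fC: "finite C" by (rule finite_subset[of _ "{..<length xs} \<times> {..<length ys}"]) (auto simp: C_def)
  have eq: "{(i, j). i < j \<and> j < length (xs@ys) \<and> (xs@ys) ! j < (xs@ys) ! i} = A \<union> ?f ` B \<union> ?g ` C"
  proof (rule set_eqI)
    fix z show "z \<in> {(i, j). i < j \<and> j < length (xs@ys) \<and> (xs@ys) ! j < (xs@ys) ! i} \<longleftrightarrow> z \<in> A \<union> ?f ` B \<union> ?g ` C"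
    proof (cases z)
      case (Pair i j)
      show ?thesis
      proof
        assume h: "z \<in> {(i, j). i < j \<and> j < length (xs@ys) \<and> (xs@ys) ! j < (xs@ys) ! i}"
        show "z \<in> A \<union> ?f ` B \<union> ?g ` C"
        proof (cases "j < ?n")
          case True then show ?thesis using h Pair by (auto simp: A_def nth_append)
        next
          case False
          show ?thesis
          proof (cases "i < ?n")
            case True
            have "(i, j - ?n) \<in> C" using h Pair True False by (auto simp: C_def nth_append)
            moreover have "z = ?g (i, j - ?n)" using Pair False by auto
            ultimately show ?thesis by blast
          next
            case F2: False
            have "(i - ?n, j - ?n) \<in> B" using h Pair F2 False by (auto simp: B_def nth_append)
            moreover have "z = ?f (i - ?n, j - ?n)" using Pair False F2 by auto
            ultimately show ?thesis by blast
          qed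
        qed
      next
        assume "z \<in> A \<union> ?f ` B \<union> ?g ` C"
        then show "z \<in> {(i, j). i < j \<and> j < length (xs@ys) \<and> (xs@ys) ! j < (xs@ys) ! i}"
          by (auto simp: A_def B_def C_def nth_append)
      qed
    qed
  qed
  have d1: "A \<inter> ?f ` B = {}" by (auto simp: A_def)
  have d2: "(A \<union> ?f ` B) \<inter> ?g ` C = {}" by (auto simp: A_def C_def)
  have i1: "inj_on ?f B" by (auto simp: inj_on_def)
  have i2: "inj_on ?g C" by (auto simp: inj_on_def)
  have "inv (xs@ys) = card (A \<union> ?f ` B \<union> ?g ` C)" unfolding inv_def eq ..
  also have "\<dots> = card A + card B + card C"
    using fA fB fC d1 d2 i1 i2 by (simp add: card_Un_disjoint card_image)
  finally show ?thesis by (simp add: inv_def cr_def A_def B_def C_def)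
qed

lemma cr_crV:
  assumes "distinct xs" "distinct ys"
  shows "cr xs ys = crV (set xs) (set ys)"
proof -
  define C where "C = {(i,j). i < length xs \<and> j < length ys \<and> ys!j < xs!i}"
  let ?h = "\<lambda>(i,j). (xs!i, ys!j)"
  have "inj_on ?h C" using assms by (auto simp: inj_on_def C_def nth_eq_iff_index_eq)
  moreover have "?h ` C = {(x, y). x \<in> set xs \<and> y \<in> set ys \<and> y < x}"
  proof
    show "?h ` C \<subseteq> {(x, y). x \<in> set xs \<and> y \<in> set ys \<and> y < x}" by (auto simp: C_def)
  next
    show "{(x, y). x \<in> set xs \<and> y \<in> set ys \<and> y < x} \<subseteq> ?h ` C"
    proof clarify
      fix x y assume "x \<in> set xs" "y \<in> set ys" "y < x"
      then obtain i j where "i < length xs" "xs!i = x" "j < length ys" "ys!j = y"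
        by (auto simp: in_set_conv_nth)
      then show "(x, y) \<in> ?h ` C" using \<open>y < x\<close> by (auto simp: C_def image_iff intro!: bexI[of _ "(i,j)"])
    qed
  qed
  ultimately show ?thesis by (simp add: cr_def crV_def C_def[symmetric] card_image[symmetric])
qed

lemma inv_sorted: "inv (sorted_list_of_set S) = 0"
proof -
  have e: "{(i, j). i < j \<and> j < length (sorted_list_of_set S) \<and> sorted_list_of_set S ! j < sorted_list_of_set S ! i} = {}"
    using sorted_wrt_nth_less[OF strict_sorted_list_of_set[of S]] by (auto dest: less_asym)
  show ?thesis unfolding inv_def e by simp
qed

lemma perm_sign_sorted: "perm_sign (sorted_list_of_set S) = 1"
  by (simp add: perm_sign_inv inv_sorted)

lemma crV_sum:
  assumes "finite X" "finite Y" "X \<inter> Y = {}"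
  shows "crV X Y + crV Y X = card X * card Y"
proof -
  have "{(x, y). x \<in> X \<and> y \<in> Y \<and> x < y} = (\<lambda>(y,x). (x,y)) ` {(y, x). y \<in> Y \<and> x \<in> X \<and> x < y}"
    by (auto simp: image_iff)
  moreover have "crV Y X = card ((\<lambda>(y,x). (x,y)) ` {(y, x). y \<in> Y \<and> x \<in> X \<and> x < y})"
    by (subst card_image) (auto simp: inj_on_def crV_def)
  ultimately have c: "crV Y X = card {(x, y). x \<in> X \<and> y \<in> Y \<and> x < y}"
    by simp
  have u: "X \<times> Y = {(x, y). x \<in> X \<and> y \<in> Y \<and> y < x} \<union> {(x, y). x \<in> X \<and> y \<in> Y \<and> x < y}"
    using assms(3) by (auto simp: neq_iff)
  have "card (X \<times> Y) = card {(x, y). x \<in> X \<and> y \<in> Y \<and> y < x} + card {(x, y). x \<in> X \<and> y \<in> Y \<and> x < y}"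
    unfolding u by (rule card_Un_disjoint)
      (auto intro: finite_subset[of _ "X \<times> Y"] simp: assms)
  then show ?thesis unfolding c by (simp add: crV_def[of X Y] card_cartesian_product)
qed

lemma prod_if_neg_one:
  assumes "finite A"
  shows "(\<Prod>x\<in>A. (if P x then -1 else 1 :: 'k::comm_ring_1)) = (-1) ^ card {x\<in>A. P x}"
proof -
  have "(\<Prod>x\<in>A. (if P x then -1 else 1 :: 'k)) = (\<Prod>x\<in>A \<inter> {x. P x}. -1) * (\<Prod>x\<in>A \<inter> - {x. P x}. 1)"
    using assms by (rule prod.If_cases)
  also have "\<dots> = (-1) ^ card {x\<in>A. P x}" by (simp add: Int_def conj_commute)
  finally show ?thesis .
qed

lemma perm_sign_prod:
  "perm_sign xs = (\<Prod>p\<in>{(i,j). i<j \<and> j<length xs}. (if xs ! snd p < xs ! fst p then -1 else 1 :: 'k::comm_ring_1))"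
proof -
  have f: "finite {(i::nat,j). i<j \<and> j<length xs}"
    by (rule finite_subset[of _ "{..<length xs} \<times> {..<length xs}"]) auto
  have e: "{p \<in> {(i,j). i<j \<and> j<length xs}. xs ! snd p < xs ! fst p} = {(i, j). i < j \<and> j < length xs \<and> xs ! j < xs ! i}"
    by auto
  show ?thesis unfolding prod_if_neg_one[OF f] e perm_sign_def ..
qed

lemma sign_compose:
  assumes "distinct xs" "length xs = n" "inj_on \<sigma> {..<n}" "\<sigma> ` {..<n} \<subseteq> {..<n}"
  shows "perm_sign (map (\<lambda>j. xs ! \<sigma> j) [0..<n]) = (perm_sign (map \<sigma> [0..<n]) :: 'k::comm_ring_1) * perm_sign xs"
proof -
  define P where "P = {(i::nat,j). i<j \<and> j<n}"
  have fP: "finite P" unfolding P_def by (rule finite_subset[of _ "{..<n} \<times> {..<n}"]) auto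
  define s :: "nat \<Rightarrow> nat \<Rightarrow> 'k" where "s x y = (if y < x then -1 else 1)" for x y
  define t :: "'a \<Rightarrow> 'a \<Rightarrow> 'k" where "t x y = (if y < x then -1 else 1)" for x y
  define f where "f p = (min (\<sigma> (fst p)) (\<sigma> (snd p)), max (\<sigma> (fst p)) (\<sigma> (snd p)))" for p
  have L: "perm_sign (map (\<lambda>j. xs ! \<sigma> j) [0..<n]) = (\<Prod>p\<in>P. t (xs ! \<sigma> (fst p)) (xs ! \<sigma> (snd p)))"
    unfolding perm_sign_prod P_def t_def by (intro prod.cong) auto
  have S: "perm_sign (map \<sigma> [0..<n]) = (\<Prod>p\<in>P. s (\<sigma> (fst p)) (\<sigma> (snd p)))"
    unfolding perm_sign_prod P_def s_def by (intro prod.cong) auto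
  have X: "perm_sign xs = (\<Prod>p\<in>P. t (xs ! fst p) (xs ! snd p))"
    unfolding perm_sign_prod P_def t_def using assms(2) by (intro prod.cong) auto
  have pw: "t (xs ! \<sigma> (fst p)) (xs ! \<sigma> (snd p)) = s (\<sigma> (fst p)) (\<sigma> (snd p)) * t (xs ! fst (f p)) (xs ! snd (f p))"
    if pP: "p \<in> P" for p
  proof -
    obtain i j where p: "p = (i,j)" "i < j" "j < n" using pP unfolding P_def by (cases p) auto
    have ne: "\<sigma> i \<noteq> \<sigma> j" using assms(3) p by (auto simp: inj_on_def)
    have lt: "\<sigma> i < n" "\<sigma> j < n" using assms(4) p by (auto simp: image_subset_iff)
    have xne: "xs ! \<sigma> i \<noteq> xs ! \<sigma> j" using assms(1,2) ne lt by (simp add: nth_eq_iff_index_eq)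
    show ?thesis
    proof (cases "\<sigma> i < \<sigma> j")
      case True then show ?thesis using p by (simp add: f_def s_def t_def)
    next
      case False then have "\<sigma> j < \<sigma> i" using ne by simp
      then show ?thesis using p xne by (auto simp: f_def s_def t_def min_def max_def)
    qed
  qed
  have inj: "inj_on f P"
  proof (rule inj_onI)
    fix p q assume pq: "p \<in> P" "q \<in> P" "f p = f q"
    obtain i j where p: "p = (i,j)" "i < j" "j < n" using pq by (auto simp: P_def)
    obtain i' j' where q: "q = (i',j')" "i' < j'" "j' < n" using pq by (auto simp: P_def)
    have iff: "\<And>a b. a < n \<Longrightarrow> b < n \<Longrightarrow> \<sigma> a = \<sigma> b \<longleftrightarrow> a = b" using assms(3) by (auto simp: inj_on_def)
    from pq(3) p q have "{\<sigma> i, \<sigma> j} = {\<sigma> i', \<sigma> j'}"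
      by (auto simp: f_def min_def max_def split: if_splits)
    then have "{i, j} = {i', j'}" using p q iff
      by (auto simp: doubleton_eq_iff)
    then show "p = q" using p q by (auto simp: doubleton_eq_iff)
  qed
  have sub: "f ` P \<subseteq> P"
  proof
    fix x assume "x \<in> f ` P"
    then obtain i j where p: "x = f (i,j)" "i < j" "j < n" by (auto simp: P_def)
    have ne: "\<sigma> i \<noteq> \<sigma> j" using assms(3) p by (auto simp: inj_on_def)
    have lt: "\<sigma> i < n" "\<sigma> j < n" using assms(4) p by (auto simp: image_subset_iff)
    show "x \<in> P" using p ne lt by (auto simp: P_def f_def min_def max_def)
  qed
  have img: "f ` P = P" by (rule endo_inj_surj[OF fP sub inj])
  have "(\<Prod>p\<in>P. t (xs ! fst (f p)) (xs ! snd (f p))) = (\<Prod>p\<in>f ` P. t (xs ! fst p) (xs ! snd p))"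
    by (simp add: prod.reindex[OF inj])
  also have "\<dots> = perm_sign xs" using img X by simp
  finally have R: "(\<Prod>p\<in>P. t (xs ! fst (f p)) (xs ! snd (f p))) = perm_sign xs" .
  have "perm_sign (map (\<lambda>j. xs ! \<sigma> j) [0..<n]) = (\<Prod>p\<in>P. s (\<sigma> (fst p)) (\<sigma> (snd p)) * t (xs ! fst (f p)) (xs ! snd (f p)))"
    unfolding L by (rule prod.cong) (auto simp: pw)
  also have "\<dots> = perm_sign (map \<sigma> [0..<n]) * perm_sign xs"
    by (simp add: prod.distrib S R)
  finally show ?thesis .
qed

lemma distinct_iff_inj_nth: "distinct zs \<longleftrightarrow> inj_on (nth zs) {..<length zs}"
  by (auto simp: distinct_conv_nth inj_on_def)

lemma ext_term_0[simp]: "ext_term 0 xs = 0"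
  by (simp add: ext_term_def)

lemma ext_term_add: "ext_term (a + b) xs = ext_term a xs + ext_term b xs"
  by (simp add: ext_term_def single_add distrib_right)

lemma ext_term_uminus: "ext_term (- a) xs = - ext_term a xs"
  by (simp add: ext_term_def single_uminus)

lemma ext_term_sorted: "finite S \<Longrightarrow> ext_term c (sorted_list_of_set S) = Poly_Mapping.single S c"
  by (simp add: ext_term_def perm_sign_sorted)

lemma ext_term_perm:
  fixes c :: "'k::comm_ring_1"
  assumes "length zs = n" "inj_on \<sigma> {..<n}" "\<sigma> ` {..<n} \<subseteq> {..<n}"
  shows "ext_term c (map (\<lambda>j. zs ! \<sigma> j) [0..<n]) = ext_term (c * perm_sign (map \<sigma> [0..<n])) zs"
proof -
  have img: "\<sigma> ` {..<n} = {..<n}" by (rule endo_inj_surj) (use assms in auto)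
  have st: "set (map (\<lambda>j. zs ! \<sigma> j) [0..<n]) = set zs"
  proof -
    have "set (map (\<lambda>j. zs ! \<sigma> j) [0..<n]) = nth zs ` (\<sigma> ` {..<n})" by auto
    also have "\<dots> = set zs" using img assms(1) by (auto simp: set_conv_nth)
    finally show ?thesis .
  qed
  have "distinct (map (\<lambda>j. zs ! \<sigma> j) [0..<n]) \<longleftrightarrow> inj_on ((nth zs) \<circ> \<sigma>) {..<n}"
    by (simp add: distinct_map atLeast0LessThan o_def)
  also have "\<dots> \<longleftrightarrow> inj_on (nth zs) (\<sigma> ` {..<n})"
    using comp_inj_on_iff[OF assms(2), of "nth zs"] by simp
  also have "\<dots> \<longleftrightarrow> distinct zs" using img assms(1) by (simp add: distinct_iff_inj_nth)
  finally have d: "distinct (map (\<lambda>j. zs ! \<sigma> j) [0..<n]) \<longleftrightarrow> distinct zs" .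
  show ?thesis
  proof (cases "distinct zs")
    case True
    have "perm_sign (map (\<lambda>j. zs ! \<sigma> j) [0..<n]) = (perm_sign (map \<sigma> [0..<n]) :: 'k) * perm_sign zs"
      by (rule sign_compose[OF True assms(1,2,3)])
    then show ?thesis using d st True
      by (simp add: ext_term_def mult.assoc)
  next
    case False then show ?thesis using d by (simp add: ext_term_def)
  qed
qed

lemma inv_transp:
  assumes "p < q" "q < n"
  shows "inv (map (\<lambda>k. if k = p then q else if k = q then p else k) [0..<n]) = 2 * (q - p - 1) + 1"
proof -
  let ?\<tau> = "\<lambda>k::nat. if k = p then q else if k = q then p else k"
  have e: "{(i, j). i < j \<and> j < length (map ?\<tau> [0..<n]) \<and> map ?\<tau> [0..<n] ! j < map ?\<tau> [0..<n] ! i}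
      = ((\<lambda>j. (p,j)) ` {p<..<q} \<union> (\<lambda>i. (i,q)) ` {p<..<q}) \<union> {(p,q)}"
    using assms by (auto simp: image_iff split: if_splits)
  have "card (((\<lambda>j. (p,j)) ` {p<..<q} \<union> (\<lambda>i. (i,q)) ` {p<..<q}) \<union> {(p,q)}) = (q - p - 1) + (q - p - 1) + 1"
    by (subst card_Un_disjoint; (subst card_Un_disjoint)?) (auto simp: card_image inj_on_def)
  then show ?thesis unfolding inv_def e by simp
qed

lemma perm_sign_transp:
  assumes "p < q" "q < n"
  shows "perm_sign (map (\<lambda>k. if k = p then q else if k = q then p else k) [0..<n]) = (-1 :: 'k::comm_ring_1)"
  by (simp add: perm_sign_inv inv_transp[OF assms])

lemma ext_term_swap_lt:
  assumes "p < q" "q < length xs"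
  shows "ext_term c (xs[p := xs!q, q := xs!p]) = - ext_term c xs"
proof -
  let ?\<tau> = "\<lambda>k::nat. if k = p then q else if k = q then p else k"
  let ?n = "length xs"
  have eq: "xs[p := xs!q, q := xs!p] = map (\<lambda>j. xs ! ?\<tau> j) [0..<?n]"
    using assms by (intro nth_equalityI) (auto simp: nth_list_update)
  have inj: "inj_on ?\<tau> {..<?n}" by (auto simp: inj_on_def split: if_splits)
  have sub: "?\<tau> ` {..<?n} \<subseteq> {..<?n}" using assms by auto
  show ?thesis unfolding eq ext_term_perm[OF refl inj sub] perm_sign_transp[OF assms]
    by (simp add: ext_term_uminus)
qed

lemma ext_term_swap:
  assumes "p \<noteq> q" "p < length xs" "q < length xs"
  shows "ext_term c (xs[p := xs!q, q := xs!p]) = - ext_term c xs"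
proof (cases "p < q")
  case True then show ?thesis using ext_term_swap_lt assms by blast
next
  case False
  then have "q < p" using assms by simp
  moreover have "xs[p := xs!q, q := xs!p] = xs[q := xs!p, p := xs!q]"
    using assms by (simp add: list_update_swap)
  ultimately show ?thesis using ext_term_swap_lt assms by metis
qed

lemma neg_one_pow_double[simp]: "(-1::'a::comm_ring_1) ^ (n + n) = 1"
  by (simp add: power_add flip: power_mult_distrib)

lemma neg_one_sq[simp]: "(-1::'a::comm_ring_1) ^ n * (-1) ^ n = 1"
  by (simp flip: power_mult_distrib)

lemma wedge_lext: "wedge p q = (\<Sum>S\<in>Poly_Mapping.keys p. (\<lambda>S a. \<Sum>T\<in>Poly_Mapping.keys q.
      ext_term (a * Poly_Mapping.lookup q T) (sorted_list_of_set S @ sorted_list_of_set T)) S (Poly_Mapping.lookup p S))"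
  by (simp add: wedge_def)

lemma wedge_zero_left[simp]: "wedge 0 q = 0" by (simp add: wedge_def)
lemma wedge_zero_right[simp]: "wedge p 0 = 0" by (simp add: wedge_def)

lemma wedge_add_left: "wedge (p + q) r = wedge p r + wedge q r"
  unfolding wedge_lext
  by (rule lext_add) (simp_all add: ext_term_add distrib_right sum.distrib)

lemma wedge_add_right: "wedge p (q + r) = wedge p q + wedge p r"
proof -
  have "\<And>S. (\<Sum>T\<in>Poly_Mapping.keys (q + r). ext_term (Poly_Mapping.lookup p S * Poly_Mapping.lookup (q + r) T) (sorted_list_of_set S @ sorted_list_of_set T))
     = (\<Sum>T\<in>Poly_Mapping.keys q. ext_term (Poly_Mapping.lookup p S * Poly_Mapping.lookup q T) (sorted_list_of_set S @ sorted_list_of_set T))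
     + (\<Sum>T\<in>Poly_Mapping.keys r. ext_term (Poly_Mapping.lookup p S * Poly_Mapping.lookup r T) (sorted_list_of_set S @ sorted_list_of_set T))"
  proof -
    fix S
    show "?thesis S"
      by (rule lext_add[where f = "\<lambda>T b. ext_term (Poly_Mapping.lookup p S * b) (sorted_list_of_set S @ sorted_list_of_set T)"])
        (simp_all add: ext_term_add distrib_left)
  qed
  then show ?thesis by (simp add: wedge_def sum.distrib)
qed

lemma wedge_sum_left: "finite A \<Longrightarrow> wedge (\<Sum>i\<in>A. f i) q = (\<Sum>i\<in>A. wedge (f i) q)"
  by (induction A rule: finite_induct) (simp_all add: wedge_add_left)

lemma wedge_sum_right: "finite A \<Longrightarrow> wedge p (\<Sum>i\<in>A. f i) = (\<Sum>i\<in>A. wedge p (f i))"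
  by (induction A rule: finite_induct) (simp_all add: wedge_add_right)

lemma wedge_single: "wedge (Poly_Mapping.single S a) (Poly_Mapping.single T b) = ext_term (a*b) (sorted_list_of_set S @ sorted_list_of_set T)"
  by (cases "a = 0"; cases "b = 0") (simp_all add: wedge_def)

lemma perm_sign_append:
  assumes "distinct xs" "distinct ys"
  shows "perm_sign (xs @ ys) = perm_sign xs * perm_sign ys * (-1) ^ crV (set xs) (set ys)"
  using assms by (simp add: perm_sign_inv inv_append cr_crV power_add)

lemma ext_term_distinct: "distinct xs \<Longrightarrow> ext_term c xs = Poly_Mapping.single (set xs) (c * perm_sign xs)"
  by (simp add: ext_term_def)

lemma wedge_ext: "wedge (ext_term a xs) (ext_term b ys) = ext_term (a*b) (xs@ys)"
proof (cases "distinct xs \<and> distinct ys")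
  case False then show ?thesis by (auto simp: ext_term_def)
next
  case True
  then have dx: "distinct xs" and dy: "distinct ys" by auto
  let ?X = "set xs" and ?Y = "set ys"
  have "wedge (ext_term a xs) (ext_term b ys) = ext_term (a * perm_sign xs * (b * perm_sign ys)) (sorted_list_of_set ?X @ sorted_list_of_set ?Y)"
    using dx dy by (simp add: ext_term_distinct wedge_single)
  also have "\<dots> = ext_term (a*b) (xs@ys)"
  proof (cases "?X \<inter> ?Y = {}")
    case True
    have d1: "distinct (sorted_list_of_set ?X @ sorted_list_of_set ?Y)" using True by simp
    have d2: "distinct (xs @ ys)" using True dx dy by simp
    have "perm_sign (sorted_list_of_set ?X @ sorted_list_of_set ?Y) = ((-1) ^ crV ?X ?Y :: 'b)"
      by (simp add: perm_sign_append perm_sign_sorted)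
    then show ?thesis using d1 d2 dx dy
      by (simp add: ext_term_distinct perm_sign_append ac_simps)
  next
    case False
    then have "\<not> distinct (sorted_list_of_set ?X @ sorted_list_of_set ?Y)" "\<not> distinct (xs@ys)" by auto
    then show ?thesis by (simp add: ext_term_def)
  qed
  finally show ?thesis .
qed

lemma ext_term_comm:
  fixes c :: "'k::comm_ring_1"
  assumes "distinct xs" "distinct ys"
  shows "ext_term c (xs @ ys) = ext_term ((-1) ^ (length xs * length ys) * c) (ys @ xs)"
proof (cases "set xs \<inter> set ys = {}")
  case True
  have cs: "crV (set xs) (set ys) + crV (set ys) (set xs) = length xs * length ys"
    using crV_sum[OF _ _ True] assms by (simp add: distinct_card)
  have "(-1::'k) ^ crV (set xs) (set ys) = (-1) ^ (length xs * length ys) * (-1) ^ crV (set ys) (set xs)"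
  proof -
    have "(-1::'k) ^ (length xs * length ys) * (-1) ^ crV (set ys) (set xs) =
        (-1) ^ crV (set xs) (set ys) * ((-1) ^ crV (set ys) (set xs) * (-1) ^ crV (set ys) (set xs))"
      by (simp only: power_add mult.assoc flip: cs)
    then show ?thesis by simp
  qed
  then show ?thesis using True assms
    by (simp add: ext_term_distinct perm_sign_append Un_commute Int_commute ac_simps)
next
  case False then show ?thesis by (auto simp: ext_term_def)
qed

lemma gderiv_lext: "gderiv sh p = (\<Sum>S\<in>Poly_Mapping.keys p. (\<lambda>S a. \<Sum>j<card S.
      ext_term a ((sorted_list_of_set S)[j := sh (sorted_list_of_set S ! j)])) S (Poly_Mapping.lookup p S))"
  by (simp add: gderiv_def)

lemma gderiv_zero[simp]: "gderiv sh 0 = 0" by (simp add: gderiv_def)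

lemma gderiv_add: "gderiv sh (p + q) = gderiv sh p + gderiv sh q"
  unfolding gderiv_lext by (rule lext_add) (simp_all add: ext_term_add sum.distrib)

lemma gderiv_sum: "finite A \<Longrightarrow> gderiv sh (\<Sum>i\<in>A. f i) = (\<Sum>i\<in>A. gderiv sh (f i))"
  by (induction A rule: finite_induct) (simp_all add: gderiv_add)

lemma gderiv_single: "gderiv sh (Poly_Mapping.single S a) =
   (\<Sum>j<card S. ext_term a ((sorted_list_of_set S)[j := sh (sorted_list_of_set S ! j)]))"
  unfolding gderiv_lext by (rule lext_single) simp

lemma gderiv_ext_distinct:
  assumes dL: "distinct L"
  shows "gderiv sh (ext_term c L) = (\<Sum>j<length L. ext_term c (L[j := sh (L!j)]))"
proof -
  define S where "S = set L"
  define ys where "ys = sorted_list_of_set S"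
  define n where "n = length L"
  have fS: "finite S" by (simp add: S_def)
  have lys: "length ys = n" by (simp add: ys_def S_def n_def distinct_card dL)
  have dys: "distinct ys" and sys: "set ys = S" by (simp_all add: ys_def fS)
  have bij: "bij_betw (nth ys) {..<n} S"
  proof -
    have "inj_on (nth ys) {..<n}" using dys lys distinct_iff_inj_nth by metis
    moreover have "nth ys ` {..<n} = S" using sys lys by (auto simp: set_conv_nth image_iff)
    ultimately show ?thesis by (simp add: bij_betw_def)
  qed
  define \<sigma> where "\<sigma> j = the_inv_into {..<n} (nth ys) (L!j)" for j
  have LS: "j < n \<Longrightarrow> L!j \<in> S" for j by (simp add: S_def n_def)
  have sig: "j < n \<Longrightarrow> \<sigma> j < n \<and> ys ! \<sigma> j = L ! j" for j
    using LS[of j] bij unfolding \<sigma>_def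
    by (metis bij_betw_def f_the_inv_into_f_bij_betw lessThan_iff the_inv_into_into subsetI)
  have inj: "inj_on \<sigma> {..<n}"
  proof (rule inj_onI)
    fix i j assume "i \<in> {..<n}" "j \<in> {..<n}" "\<sigma> i = \<sigma> j"
    then have "L!i = L!j" using sig by (metis lessThan_iff)
    then show "i = j" using dL \<open>i \<in> {..<n}\<close> \<open>j \<in> {..<n}\<close> by (simp add: n_def nth_eq_iff_index_eq)
  qed
  have sub: "\<sigma> ` {..<n} \<subseteq> {..<n}" using sig by auto
  have img: "\<sigma> ` {..<n} = {..<n}" by (rule endo_inj_surj[OF _ sub inj]) simp
  have bs: "bij_betw \<sigma> {..<n} {..<n}" using inj img by (simp add: bij_betw_def)
  define d where "d = c * perm_sign (map \<sigma> [0..<n])"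
  have Leq: "L = map (\<lambda>j. ys ! \<sigma> j) [0..<n]"
    by (rule nth_equalityI) (simp_all add: n_def sig)
  have Lj: "L[j := w] = map (\<lambda>i. (ys[\<sigma> j := w]) ! \<sigma> i) [0..<n]" if "j < n" for j w
  proof (rule nth_equalityI)
    show "length (L[j := w]) = length (map (\<lambda>i. (ys[\<sigma> j := w]) ! \<sigma> i) [0..<n])" by (simp add: n_def)
  next
    fix i assume "i < length (L[j := w])"
    then have i: "i < n" by (simp add: n_def)
    have "\<sigma> i = \<sigma> j \<longleftrightarrow> i = j" using inj i that by (auto simp: inj_on_def)
    then show "L[j := w] ! i = map (\<lambda>i. (ys[\<sigma> j := w]) ! \<sigma> i) [0..<n] ! i"
      using i that sig[of i] sig[of j] lys by (auto simp: nth_list_update n_def)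
  qed
  have lhs: "ext_term c L = Poly_Mapping.single S d"
    using ext_term_perm[OF lys inj sub, of c] Leq by (simp add: d_def ys_def ext_term_sorted fS)
  have "(\<Sum>j<length L. ext_term c (L[j := sh (L!j)])) = (\<Sum>j<n. ext_term d (ys[\<sigma> j := sh (ys ! \<sigma> j)]))"
  proof (rule sum.cong)
    fix j assume "j \<in> {..<n}"
    then have j: "j < n" by simp
    have "ext_term c (L[j := sh (L!j)]) = ext_term c (map (\<lambda>i. (ys[\<sigma> j := sh (ys ! \<sigma> j)]) ! \<sigma> i) [0..<n])"
      using Lj[OF j] sig[OF j] by simp
    also have "\<dots> = ext_term d (ys[\<sigma> j := sh (ys ! \<sigma> j)])"
      using ext_term_perm[OF _ inj sub, of "ys[\<sigma> j := sh (ys ! \<sigma> j)]" c] lys by (simp add: d_def)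
    finally show "ext_term c (L[j := sh (L!j)]) = ext_term d (ys[\<sigma> j := sh (ys ! \<sigma> j)])" .
  qed (simp add: n_def)
  also have "\<dots> = (\<Sum>k<n. ext_term d (ys[k := sh (ys ! k)]))"
    by (rule sum.reindex_bij_betw[OF bs, where g = "\<lambda>k. ext_term d (ys[k := sh (ys ! k)])"])
  also have "\<dots> = gderiv sh (Poly_Mapping.single S d)"
    using lys by (simp add: gderiv_single ys_def fS S_def distinct_card dL n_def)
  finally show ?thesis using lhs by simp
qed

lemma gderiv_ext:
  "gderiv sh (ext_term c L) = (\<Sum>j<length L. ext_term c (L[j := sh (L!j)]))"
proof (cases "distinct L")
  case True then show ?thesis by (rule gderiv_ext_distinct)
next
  case False
  then obtain p q where pq: "p < q" "q < length L" "L!p = L!q"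
    by (metis distinct_conv_nth linorder_neqE_nat)
  have p: "p < length L" using pq by simp
  let ?f = "\<lambda>j. ext_term c (L[j := sh (L!j)])"
  have z: "?f j = 0" if "j < length L" "j \<noteq> p" "j \<noteq> q" for j
  proof -
    have "L[j := sh (L!j)] ! p = L[j := sh (L!j)] ! q" using that pq by simp
    then have "\<not> distinct (L[j := sh (L!j)])"
      using pq by (metis distinct_conv_nth length_list_update less_not_refl3 order.strict_trans)
    then show ?thesis by (simp add: ext_term_def)
  qed
  have sw: "L[q := sh (L!q)] = (L[p := sh (L!p)])[p := (L[p := sh (L!p)]) ! q, q := (L[p := sh (L!p)]) ! p]"
    using pq by (intro nth_equalityI) (auto simp: nth_list_update)
  have pqc: "?f p + ?f q = 0"
    using ext_term_swap[of p q "L[p := sh (L!p)]" c] pq sw by simp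
  have "(\<Sum>j<length L. ?f j) = (\<Sum>j\<in>{p,q}. ?f j) + (\<Sum>j\<in>{..<length L} - {p,q}. ?f j)"
    using pq by (subst sum.subset_diff[of "{p,q}"]) auto
  also have "(\<Sum>j\<in>{..<length L} - {p,q}. ?f j) = 0" by (rule sum.neutral) (use z in auto)
  also have "(\<Sum>j\<in>{p,q}. ?f j) = 0" using pq pqc by simp
  finally show ?thesis using False by (simp add: ext_term_def)
qed

definition fin :: "('a set \<Rightarrow>\<^sub>0 'k::zero) \<Rightarrow> bool" where
  "fin p \<longleftrightarrow> (\<forall>S\<in>Poly_Mapping.keys p. finite S)"

definition evn :: "('a set \<Rightarrow>\<^sub>0 'k::zero) \<Rightarrow> bool" where
  "evn p \<longleftrightarrow> (\<forall>S\<in>Poly_Mapping.keys p. finite S \<and> even (card S))"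

lemma keys_ext_term: "Poly_Mapping.keys (ext_term c xs) \<subseteq> (if distinct xs then {set xs} else {})"
  by (simp add: ext_term_def)

lemma keys_wedge:
  assumes "fin p" "fin q"
  shows "Poly_Mapping.keys (wedge p q) \<subseteq> {S \<union> T | S T. S \<in> Poly_Mapping.keys p \<and> T \<in> Poly_Mapping.keys q \<and> S \<inter> T = {}}"
proof -
  have "Poly_Mapping.keys (wedge p q) \<subseteq> (\<Union>S\<in>Poly_Mapping.keys p. \<Union>T\<in>Poly_Mapping.keys q.
      Poly_Mapping.keys (ext_term (Poly_Mapping.lookup p S * Poly_Mapping.lookup q T) (sorted_list_of_set S @ sorted_list_of_set T)))"
    unfolding wedge_def
  proof (rule order.trans[OF keys_sum], rule UN_mono[OF order.refl])
    fix S show "Poly_Mapping.keys (\<Sum>T\<in>Poly_Mapping.keys q. ext_term (Poly_Mapping.lookup p S * Poly_Mapping.lookup q T) (sorted_list_of_set S @ sorted_list_of_set T))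
      \<subseteq> (\<Union>T\<in>Poly_Mapping.keys q. Poly_Mapping.keys (ext_term (Poly_Mapping.lookup p S * Poly_Mapping.lookup q T) (sorted_list_of_set S @ sorted_list_of_set T)))"
      by (rule keys_sum)
  qed
  also have "\<dots> \<subseteq> {S \<union> T | S T. S \<in> Poly_Mapping.keys p \<and> T \<in> Poly_Mapping.keys q \<and> S \<inter> T = {}}"
  proof (clarsimp)
    fix x S T assume h: "S \<in> Poly_Mapping.keys p" "T \<in> Poly_Mapping.keys q"
      "x \<in> Poly_Mapping.keys (ext_term (Poly_Mapping.lookup p S * Poly_Mapping.lookup q T) (sorted_list_of_set S @ sorted_list_of_set T))"
    have fS: "finite S" "finite T" using h assms by (auto simp: fin_def)
    show "\<exists>S T. x = S \<union> T \<and> S \<in> Poly_Mapping.keys p \<and> T \<in> Poly_Mapping.keys q \<and> S \<inter> T = {}"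
    proof -
      have "x \<in> (if distinct (sorted_list_of_set S @ sorted_list_of_set T) then {set (sorted_list_of_set S @ sorted_list_of_set T)} else {})"
        using keys_ext_term h(3) by blast
      then have d: "distinct (sorted_list_of_set S @ sorted_list_of_set T) \<and> x = set (sorted_list_of_set S @ sorted_list_of_set T)"
        by (auto split: if_splits)
      then have "x = S \<union> T" "S \<inter> T = {}" using fS by auto
      then show ?thesis using h by blast
    qed
  qed
  finally show ?thesis .
qed

lemma fin_wedge: "fin p \<Longrightarrow> fin q \<Longrightarrow> fin (wedge p q)"
  using keys_wedge[of p q] unfolding fin_def by blast

lemma evn_fin: "evn p \<Longrightarrow> fin p" by (simp add: evn_def fin_def)

lemma evn_wedge: "evn p \<Longrightarrow> evn q \<Longrightarrow> evn (wedge p q)"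
proof -
  assume a: "evn p" "evn q"
  show "evn (wedge p q)" unfolding evn_def
  proof
    fix U assume "U \<in> Poly_Mapping.keys (wedge p q)"
    then obtain S T where "U = S \<union> T" "S \<in> Poly_Mapping.keys p" "T \<in> Poly_Mapping.keys q" "S \<inter> T = {}"
    proof -
      have "U \<in> {S \<union> T | S T. S \<in> Poly_Mapping.keys p \<and> T \<in> Poly_Mapping.keys q \<and> S \<inter> T = {}}"
        using keys_wedge[OF evn_fin[OF a(1)] evn_fin[OF a(2)]] \<open>U \<in> _\<close> by (rule subsetD)
      then show ?thesis using that by (simp only: mem_Collect_eq) metis
    qed
    then show "finite U \<and> even (card U)" using a by (auto simp: evn_def card_Un_disjoint)
  qed
qed

lemma keys_gderiv_card:
  assumes "fin p" "U \<in> Poly_Mapping.keys (gderiv sh p)"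
  shows "\<exists>S\<in>Poly_Mapping.keys p. finite U \<and> card U = card S"
proof -
  have "U \<in> (\<Union>S\<in>Poly_Mapping.keys p. Poly_Mapping.keys (\<Sum>j<card S.
      ext_term (Poly_Mapping.lookup p S) ((sorted_list_of_set S)[j := sh (sorted_list_of_set S ! j)])))"
    using assms(2) unfolding gderiv_def by (rule subsetD[OF keys_sum])
  then obtain S where S: "S \<in> Poly_Mapping.keys p" "U \<in> Poly_Mapping.keys (\<Sum>j<card S.
      ext_term (Poly_Mapping.lookup p S) ((sorted_list_of_set S)[j := sh (sorted_list_of_set S ! j)]))"
    by blast
  then obtain j where "U \<in> Poly_Mapping.keys (ext_term (Poly_Mapping.lookup p S) ((sorted_list_of_set S)[j := sh (sorted_list_of_set S ! j)]))"
    using subsetD[OF keys_sum S(2)] by blast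
  then have "U \<in> (if distinct ((sorted_list_of_set S)[j := sh (sorted_list_of_set S ! j)]) then {set ((sorted_list_of_set S)[j := sh (sorted_list_of_set S ! j)])} else {})"
    using keys_ext_term by blast
  then have "distinct ((sorted_list_of_set S)[j := sh (sorted_list_of_set S ! j)])" "U = set ((sorted_list_of_set S)[j := sh (sorted_list_of_set S ! j)])"
    by (auto split: if_splits)
  then have "card U = card S" using assms(1) S(1) by (simp add: distinct_card fin_def)
  then show ?thesis using S(1) by (auto simp: \<open>U = _\<close>)
qed

lemma evn_gderiv: "evn p \<Longrightarrow> evn (gderiv sh p)"
proof -
  assume e: "evn p"
  show "evn (gderiv sh p)" unfolding evn_def
  proof
    fix U assume "U \<in> Poly_Mapping.keys (gderiv sh p)"
    then obtain S where "S \<in> Poly_Mapping.keys p" "finite U" "card U = card S"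
      using keys_gderiv_card[OF evn_fin[OF e]] by blast
    then show "finite U \<and> even (card U)" using e by (auto simp: evn_def)
  qed
qed

lemma evn_add: "evn p \<Longrightarrow> evn q \<Longrightarrow> evn (p + q)"
  unfolding evn_def using keys_add[of p q] by (meson UnE subsetD)

lemma evn_uminus: "evn p \<Longrightarrow> evn (- p)"
  unfolding evn_def by simp

lemma evn_diff: "evn p \<Longrightarrow> evn q \<Longrightarrow> evn (p - (q :: 'a set \<Rightarrow>\<^sub>0 'b::ab_group_add))"
proof -
  assume "evn p" "evn q"
  moreover have "p - q = p + - q" by simp
  ultimately show ?thesis by (simp only: evn_add evn_uminus)
qed

lemma evn_single: "finite S \<Longrightarrow> even (card S) \<Longrightarrow> evn (Poly_Mapping.single S c)"
  by (simp add: evn_def)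


lemma wedge_assoc:
  fixes p q r :: "'a::linorder set \<Rightarrow>\<^sub>0 'k::comm_ring_1"
  assumes "fin p" "fin q" "fin r"
  shows "wedge (wedge p q) r = wedge p (wedge q r)"
proof (rule pm_induct_keys[where P = "\<lambda>p. wedge (wedge p q) r = wedge p (wedge q r)" and p = p])
  fix p1 p2 assume "wedge (wedge p1 q) r = wedge p1 (wedge q r)" "wedge (wedge p2 q) r = wedge p2 (wedge q r)"
  then show "wedge (wedge (p1 + p2) q) r = wedge (p1 + p2) (wedge q r)" by (simp add: wedge_add_left) 
next
  fix S and a :: 'k assume "S \<in> Poly_Mapping.keys p"
  then have fS: "finite S" using assms by (auto simp: fin_def)
  show "wedge (wedge (Poly_Mapping.single S a) q) r = wedge (Poly_Mapping.single S a) (wedge q r)"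
  proof (rule pm_induct_keys[where P = "\<lambda>q. wedge (wedge (Poly_Mapping.single S a) q) r = wedge (Poly_Mapping.single S a) (wedge q r)" and p = q])
    fix q1 q2 assume "wedge (wedge (Poly_Mapping.single S a) q1) r = wedge (Poly_Mapping.single S a) (wedge q1 r)"
      "wedge (wedge (Poly_Mapping.single S a) q2) r = wedge (Poly_Mapping.single S a) (wedge q2 r)"
    then show "wedge (wedge (Poly_Mapping.single S a) (q1 + q2)) r = wedge (Poly_Mapping.single S a) (wedge (q1 + q2) r)"
      by (simp add: wedge_add_left wedge_add_right)
  next
    fix T and b :: 'k assume "T \<in> Poly_Mapping.keys q"
    then have fT: "finite T" using assms by (auto simp: fin_def)
    show "wedge (wedge (Poly_Mapping.single S a) (Poly_Mapping.single T b)) r = wedge (Poly_Mapping.single S a) (wedge (Poly_Mapping.single T b) r)"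
    proof (rule pm_induct_keys[where P = "\<lambda>r. wedge (wedge (Poly_Mapping.single S a) (Poly_Mapping.single T b)) r = wedge (Poly_Mapping.single S a) (wedge (Poly_Mapping.single T b) r)" and p = r])
      fix r1 r2 assume "wedge (wedge (Poly_Mapping.single S a) (Poly_Mapping.single T b)) r1 = wedge (Poly_Mapping.single S a) (wedge (Poly_Mapping.single T b) r1)"
        "wedge (wedge (Poly_Mapping.single S a) (Poly_Mapping.single T b)) r2 = wedge (Poly_Mapping.single S a) (wedge (Poly_Mapping.single T b) r2)"
      then show "wedge (wedge (Poly_Mapping.single S a) (Poly_Mapping.single T b)) (r1 + r2) = wedge (Poly_Mapping.single S a) (wedge (Poly_Mapping.single T b) (r1 + r2))"
        by (simp add: wedge_add_right)
    next
      fix U and c :: 'k assume "U \<in> Poly_Mapping.keys r"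
      then have fU: "finite U" using assms by (auto simp: fin_def)
      have sS: "Poly_Mapping.single S a = ext_term a (sorted_list_of_set S)" by (simp add: ext_term_sorted fS)
      have sT: "Poly_Mapping.single T b = ext_term b (sorted_list_of_set T)" by (simp add: ext_term_sorted fT)
      have sU: "Poly_Mapping.single U c = ext_term c (sorted_list_of_set U)" by (simp add: ext_term_sorted fU)
      show "wedge (wedge (Poly_Mapping.single S a) (Poly_Mapping.single T b)) (Poly_Mapping.single U c) = wedge (Poly_Mapping.single S a) (wedge (Poly_Mapping.single T b) (Poly_Mapping.single U c))"
        unfolding sS sT sU by (simp only: wedge_ext mult.assoc append_assoc)
    qed simp
  qed simp
qed simp

lemma wedge_comm:
  fixes p q :: "'a::linorder set \<Rightarrow>\<^sub>0 'k::comm_ring_1"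
  assumes "evn p" "evn q"
  shows "wedge p q = wedge q p"
proof (rule pm_induct_keys[where P = "\<lambda>p. wedge p q = wedge q p" and p = p])
  fix p1 p2 assume "wedge p1 q = wedge q p1" "wedge p2 q = wedge q p2"
  then show "wedge (p1 + p2) q = wedge q (p1 + p2)" by (simp add: wedge_add_left wedge_add_right)
next
  fix S and a :: 'k assume "S \<in> Poly_Mapping.keys p"
  then have fS: "finite S" "even (card S)" using assms by (auto simp: evn_def)
  show "wedge (Poly_Mapping.single S a) q = wedge q (Poly_Mapping.single S a)"
  proof (rule pm_induct_keys[where P = "\<lambda>q. wedge (Poly_Mapping.single S a) q = wedge q (Poly_Mapping.single S a)" and p = q])
    fix q1 q2 assume "wedge (Poly_Mapping.single S a) q1 = wedge q1 (Poly_Mapping.single S a)"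
      "wedge (Poly_Mapping.single S a) q2 = wedge q2 (Poly_Mapping.single S a)"
    then show "wedge (Poly_Mapping.single S a) (q1 + q2) = wedge (q1 + q2) (Poly_Mapping.single S a)"
      by (simp add: wedge_add_left wedge_add_right)
  next
    fix T and b :: 'k assume "T \<in> Poly_Mapping.keys q"
    then have fT: "finite T" using assms by (auto simp: evn_def)
    have "ext_term (a * b) (sorted_list_of_set S @ sorted_list_of_set T) = ext_term (b * a) (sorted_list_of_set T @ sorted_list_of_set S)"
      using ext_term_comm[of "sorted_list_of_set S" "sorted_list_of_set T" "a*b"] fS fT
      by (simp add: mult.commute)
    then show "wedge (Poly_Mapping.single S a) (Poly_Mapping.single T b) = wedge (Poly_Mapping.single T b) (Poly_Mapping.single S a)"
      by (simp add: wedge_single)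
  qed simp
qed simp

lemma wedge_one_left: "fin p \<Longrightarrow> wedge (Poly_Mapping.single {} 1) p = (p :: 'a::linorder set \<Rightarrow>\<^sub>0 'k::comm_ring_1)"
proof (rule pm_induct_keys[where P = "\<lambda>q. wedge (Poly_Mapping.single {} 1) q = q" and p = p])
  fix S and a :: 'k assume "fin p" "S \<in> Poly_Mapping.keys p"
  then show "wedge (Poly_Mapping.single {} 1) (Poly_Mapping.single S a) = Poly_Mapping.single S a"
    by (simp add: wedge_single fin_def ext_term_sorted)
qed (simp_all add: wedge_add_right)

lemma lookup_gscal: "Poly_Mapping.lookup (gscal c p) k = c * Poly_Mapping.lookup p k"
  unfolding gscal_def by transfer (simp add: when_def)

lemma wedge_scal: "fin p \<Longrightarrow> wedge (Poly_Mapping.single {} c) p = gscal c (p :: 'a::linorder set \<Rightarrow>\<^sub>0 'k::comm_ring_1)"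
proof (rule pm_induct_keys[where P = "\<lambda>q. wedge (Poly_Mapping.single {} c) q = gscal c q" and p = p])
  show "wedge (Poly_Mapping.single {} c) 0 = gscal c 0" by (simp add: poly_mapping_eqI lookup_gscal)
next
  fix S and a :: 'k assume "fin p" "S \<in> Poly_Mapping.keys p"
  then show "wedge (Poly_Mapping.single {} c) (Poly_Mapping.single S a) = gscal c (Poly_Mapping.single S a)"
    by (simp add: wedge_single fin_def ext_term_sorted gscal_def)
next
  fix q r :: "'a set \<Rightarrow>\<^sub>0 'k" assume "wedge (Poly_Mapping.single {} c) q = gscal c q" "wedge (Poly_Mapping.single {} c) r = gscal c r"
  then show "wedge (Poly_Mapping.single {} c) (q + r) = gscal c (q + r)"
    by (simp add: wedge_add_right poly_mapping_eqI lookup_gscal lookup_add distrib_left)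
qed

lemma sum_lessThan_add_nat: "(\<Sum>j<n+(m::nat). f j) = (\<Sum>j<n. f j) + (\<Sum>i<m. f (n+i))"
  by (induction m) (simp_all add: add.assoc)

lemma gderiv_leibniz:
  fixes p q :: "'a::linorder set \<Rightarrow>\<^sub>0 'k::comm_ring_1"
  assumes "fin p" "fin q"
  shows "gderiv sh (wedge p q) = wedge (gderiv sh p) q + wedge p (gderiv sh q)"
proof (rule pm_induct_keys[where P = "\<lambda>p. gderiv sh (wedge p q) = wedge (gderiv sh p) q + wedge p (gderiv sh q)" and p = p])
  fix p1 p2 assume "gderiv sh (wedge p1 q) = wedge (gderiv sh p1) q + wedge p1 (gderiv sh q)"
    "gderiv sh (wedge p2 q) = wedge (gderiv sh p2) q + wedge p2 (gderiv sh q)"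
  then show "gderiv sh (wedge (p1 + p2) q) = wedge (gderiv sh (p1 + p2)) q + wedge (p1 + p2) (gderiv sh q)"
    by (simp add: wedge_add_left gderiv_add wedge_add_right)
next
  fix S and a :: 'k assume "S \<in> Poly_Mapping.keys p"
  then have fS: "finite S" using assms by (auto simp: fin_def)
  show "gderiv sh (wedge (Poly_Mapping.single S a) q) = wedge (gderiv sh (Poly_Mapping.single S a)) q + wedge (Poly_Mapping.single S a) (gderiv sh q)"
  proof (rule pm_induct_keys[where P = "\<lambda>q. gderiv sh (wedge (Poly_Mapping.single S a) q) = wedge (gderiv sh (Poly_Mapping.single S a)) q + wedge (Poly_Mapping.single S a) (gderiv sh q)" and p = q])
    fix q1 q2 assume "gderiv sh (wedge (Poly_Mapping.single S a) q1) = wedge (gderiv sh (Poly_Mapping.single S a)) q1 + wedge (Poly_Mapping.single S a) (gderiv sh q1)"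
      "gderiv sh (wedge (Poly_Mapping.single S a) q2) = wedge (gderiv sh (Poly_Mapping.single S a)) q2 + wedge (Poly_Mapping.single S a) (gderiv sh q2)"
    then show "gderiv sh (wedge (Poly_Mapping.single S a) (q1 + q2)) = wedge (gderiv sh (Poly_Mapping.single S a)) (q1 + q2) + wedge (Poly_Mapping.single S a) (gderiv sh (q1 + q2))"
      by (simp add: wedge_add_left wedge_add_right gderiv_add)
  next
    fix T and b :: 'k assume "T \<in> Poly_Mapping.keys q"
    then have fT: "finite T" using assms by (auto simp: fin_def)
    define xs where "xs = sorted_list_of_set S"
    define ys where "ys = sorted_list_of_set T"
    have sS: "Poly_Mapping.single S a = ext_term a xs" by (simp add: xs_def ext_term_sorted fS)
    have sT: "Poly_Mapping.single T b = ext_term b ys" by (simp add: ys_def ext_term_sorted fT)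
    have "gderiv sh (wedge (ext_term a xs) (ext_term b ys)) =
       (\<Sum>j<length xs + length ys. ext_term (a*b) ((xs@ys)[j := sh ((xs@ys)!j)]))"
      by (simp add: wedge_ext gderiv_ext)
    also have "\<dots> = (\<Sum>j<length xs. ext_term (a*b) (xs[j := sh (xs!j)] @ ys)) + (\<Sum>i<length ys. ext_term (a*b) (xs @ ys[i := sh (ys!i)]))"
      by (simp add: sum_lessThan_add_nat list_update_append nth_append)
    also have "\<dots> = wedge (gderiv sh (ext_term a xs)) (ext_term b ys) + wedge (ext_term a xs) (gderiv sh (ext_term b ys))"
      by (simp add: gderiv_ext wedge_sum_left wedge_sum_right wedge_ext)
    finally show "gderiv sh (wedge (Poly_Mapping.single S a) (Poly_Mapping.single T b)) = wedge (gderiv sh (Poly_Mapping.single S a)) (Poly_Mapping.single T b) + wedge (Poly_Mapping.single S a) (gderiv sh (Poly_Mapping.single T b))"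
      by (simp add: sS sT)
  qed simp
qed simp

typedef (overloaded) ('k::comm_ring_1) ev = "{p :: 'k grass. evn p}" morphisms rep_ev abs_ev
  by (rule exI[of _ 0]) (simp add: evn_def)

setup_lifting type_definition_ev

instantiation ev :: (comm_ring_1) comm_ring_1
begin
lift_definition zero_ev :: "'a ev" is 0 by (simp add: evn_def)
lift_definition one_ev :: "'a ev" is "Poly_Mapping.single {} 1" by (simp add: evn_single)
lift_definition plus_ev :: "'a ev \<Rightarrow> 'a ev \<Rightarrow> 'a ev" is "(+)" by (rule evn_add)
lift_definition minus_ev :: "'a ev \<Rightarrow> 'a ev \<Rightarrow> 'a ev" is "(-)" by (rule evn_diff)
lift_definition uminus_ev :: "'a ev \<Rightarrow> 'a ev" is uminus by (rule evn_uminus)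
lift_definition times_ev :: "'a ev \<Rightarrow> 'a ev \<Rightarrow> 'a ev" is wedge by (rule evn_wedge)
instance
proof
  fix a b c :: "'a ev"
  show "a * b * c = a * (b * c)" by transfer (simp add: wedge_assoc evn_fin)
  show "a * b = b * a" by transfer (rule wedge_comm)
  show "1 * a = a" by transfer (simp add: wedge_one_left evn_fin)
  show "(a + b) * c = a * c + b * c" by transfer (rule wedge_add_left)
  show "a + b + c = a + (b + c)" by transfer (rule add.assoc)
  show "a + b = b + a" by transfer (rule add.commute)
  show "0 + a = a" by transfer simp
  show "- a + a = 0" by transfer simp
  show "a - b = a + - b" by transfer simp
  show "(0::'a ev) \<noteq> 1" by transfer (metis lookup_single_eq lookup_zero zero_neq_one)
qed
end

lift_definition D :: "'k::comm_ring_1 ev \<Rightarrow> 'k ev" is "gderiv shift" by (rule evn_gderiv)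

lemma D_add: "D (x + y) = D x + D y"
  by transfer (rule gderiv_add)

lemma D_mult: "D (x * y) = D x * y + x * D y"
  by transfer (simp add: gderiv_leibniz evn_fin)

lemma D_one[simp]: "D 1 = 0"
  by transfer (simp add: gderiv_single)

lemma D_zero[simp]: "D 0 = 0"
  by transfer simp

lemma D_sum: "D (sum f A) = sum (\<lambda>i. D (f i)) A"
  by (induction A rule: infinite_finite_induct) (simp_all add: D_add)

lemma D_of_nat[simp]: "D (of_nat n) = 0"
  by (induction n) (simp_all add: D_add)

lemma D_of_nat_mult: "D (of_nat n * x) = of_nat n * D x"
  by (simp add: D_mult)

lemma D_minus: "D (- x) = - D x"
  by (metis D_add D_zero add_eq_0_iff)

lift_definition kap :: "'k::comm_ring_1 \<Rightarrow> 'k ev" is "\<lambda>c. Poly_Mapping.single {} c" by (simp add: evn_single)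

lemma kap_add: "kap (a + b) = kap a + kap b" by transfer (simp add: single_add)
lemma kap_mult: "kap (a * b) = kap a * kap b" by transfer (simp add: wedge_single ext_term_def perm_sign_def)
lemma kap_one[simp]: "kap 1 = 1" by transfer simp
lemma kap_zero[simp]: "kap 0 = 0" by transfer simp
lemma D_kap[simp]: "D (kap c) = 0" by transfer (simp add: gderiv_single)
lemma rep_kap_mult: "rep_ev (kap c * x) = gscal c (rep_ev x)"
  by transfer (simp add: wedge_scal evn_fin)

lift_definition Ev :: "nat \<Rightarrow> nat \<Rightarrow> nat \<Rightarrow> 'k::comm_ring_1 ev" is "\<lambda>l a b. ext_term 1 [xi l a, eta l b]"
proof -
  fix l a b
  have "xi l a \<noteq> eta l b" by (simp add: xi_def eta_def)
  then show "evn (ext_term 1 [xi l a, eta l b] :: 'k grass)"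
    by (simp add: ext_term_def evn_def)
qed

lemma D_Ev: "D (Ev l a b) = Ev l (Suc a) b + Ev l a (Suc b)"
  by transfer (simp add: gderiv_ext shift_def xi_def eta_def numeral_2_eq_2 lessThan_Suc)

definition P :: "nat \<Rightarrow> nat \<Rightarrow> 'k::comm_ring_1 ev" where
  "P m n = (\<Sum>l<m - 1. \<Sum>a\<le>n. of_nat (n choose a) * Ev l a (n - a))"

lemma pascal_sum:
  fixes E :: "nat \<Rightarrow> nat \<Rightarrow> 'k::comm_ring_1 ev"
  shows "(\<Sum>a\<le>n. of_nat (n choose a) * (E (Suc a) (n - a) + E a (Suc (n - a))))
       = (\<Sum>a\<le>Suc n. of_nat (Suc n choose a) * E a (Suc n - a))"
proof -
  have A: "(\<Sum>a\<le>n. of_nat (n choose a) * E a (Suc (n - a))) = E 0 (Suc n) + (\<Sum>a\<le>n. of_nat (n choose Suc a) * E (Suc a) (n - a))"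
  proof -
    have "(\<Sum>a\<le>n. of_nat (n choose a) * E a (Suc (n - a))) = (\<Sum>a\<le>Suc n. of_nat (n choose a) * E a (Suc n - a))"
      by (simp add: Suc_diff_le binomial_eq_0)
    also have "\<dots> = E 0 (Suc n) + (\<Sum>a\<le>n. of_nat (n choose Suc a) * E (Suc a) (n - a))"
      by (subst sum.atMost_Suc_shift) (simp add: binomial_eq_0)
    finally show ?thesis .
  qed
  have "(\<Sum>a\<le>Suc n. of_nat (Suc n choose a) * E a (Suc n - a)) = E 0 (Suc n) + (\<Sum>a\<le>n. of_nat (Suc n choose Suc a) * E (Suc a) (n - a))"
    by (subst sum.atMost_Suc_shift) simp
  also have "\<dots> = E 0 (Suc n) + (\<Sum>a\<le>n. of_nat (n choose a) * E (Suc a) (n - a)) + (\<Sum>a\<le>n. of_nat (n choose Suc a) * E (Suc a) (n - a))"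
    by (simp add: sum.distrib distrib_right add.assoc)
  finally show ?thesis using A by (simp add: sum.distrib distrib_left add_ac)
qed

lemma D_P: "D (P m n) = P m (Suc n)"
proof -
  have "D (P m n) = (\<Sum>l<m - 1. \<Sum>a\<le>n. of_nat (n choose a) * (Ev l (Suc a) (n - a) + Ev l a (Suc (n - a))))"
    by (simp add: P_def D_sum D_of_nat_mult D_Ev)
  also have "\<dots> = P m (Suc n)"
    unfolding P_def by (rule sum.cong[OF refl]) (rule pascal_sum[where E = "Ev _"])
  finally show ?thesis .
qed

lemma rep_ev_sum: "rep_ev (sum f A) = (\<Sum>i\<in>A. rep_ev (f i))"
  by (induction A rule: infinite_finite_induct) (simp_all add: zero_ev.rep_eq plus_ev.rep_eq)

lemma gen_ext: "gen x = ext_term 1 [x]"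
proof -
  have "[x] = sorted_list_of_set {x}" by simp
  then show ?thesis by (simp only: gen_def ext_term_sorted finite.intros)
qed

lemma rep_P0: "rep_ev (P m 0 :: 'k::comm_ring_1 ev) = omega m"
proof -
  have "rep_ev (P m 0 :: 'k ev) = (\<Sum>l<m - 1. rep_ev (Ev l 0 0 :: 'k ev))"
    unfolding P_def by (simp add: rep_ev_sum)
  also have "\<dots> = omega m"
    unfolding omega_def by (rule sum.cong[OF refl]) (simp add: Ev.rep_eq gen_ext wedge_ext)
  finally show ?thesis .
qed

abbreviation e1 :: "nat \<Rightarrow> nat \<Rightarrow>\<^sub>0 nat" where "e1 n \<equiv> Poly_Mapping.single n 1"

lemma keys_add_nat: "Poly_Mapping.keys (\<mu> + \<nu>) = Poly_Mapping.keys \<mu> \<union> Poly_Mapping.keys (\<nu> :: nat \<Rightarrow>\<^sub>0 nat)"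
  by (auto simp: in_keys_iff lookup_add)

definition PhiM :: "nat \<Rightarrow> (nat \<Rightarrow>\<^sub>0 nat) \<Rightarrow> 'k::comm_ring_1 ev" where
  "PhiM m \<mu> = (\<Prod>n\<in>Poly_Mapping.keys \<mu>. P m n ^ Poly_Mapping.lookup \<mu> n)"

lemma PhiM_superset: "finite K \<Longrightarrow> Poly_Mapping.keys \<mu> \<subseteq> K \<Longrightarrow> PhiM m \<mu> = (\<Prod>n\<in>K. P m n ^ Poly_Mapping.lookup \<mu> n)"
  unfolding PhiM_def by (rule prod.mono_neutral_left) (auto simp: in_keys_iff)

lemma PhiM_add: "PhiM m (\<mu> + \<nu>) = PhiM m \<mu> * PhiM m \<nu>"
proof -
  let ?K = "Poly_Mapping.keys \<mu> \<union> Poly_Mapping.keys \<nu>"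
  have "PhiM m (\<mu> + \<nu>) = (\<Prod>n\<in>?K. P m n ^ Poly_Mapping.lookup (\<mu> + \<nu>) n)"
    by (rule PhiM_superset) (auto simp: keys_add_nat)
  also have "\<dots> = (\<Prod>n\<in>?K. P m n ^ Poly_Mapping.lookup \<mu> n) * (\<Prod>n\<in>?K. P m n ^ Poly_Mapping.lookup \<nu> n)"
    by (simp add: lookup_add power_add prod.distrib)
  also have "\<dots> = PhiM m \<mu> * PhiM m \<nu>"
    by (simp add: PhiM_superset[symmetric])
  finally show ?thesis .
qed

lemma PhiM_zero[simp]: "PhiM m 0 = 1" by (simp add: PhiM_def)

lemma PhiM_e1[simp]: "PhiM m (e1 n) = (P m n :: 'k::comm_ring_1 ev)" unfolding PhiM_def by simp

definition hom :: "nat \<Rightarrow> 'k::comm_ring_1 dpoly \<Rightarrow> 'k ev" where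
  "hom m p = (\<Sum>\<mu>\<in>Poly_Mapping.keys p. kap (Poly_Mapping.lookup p \<mu>) * PhiM m \<mu>)"

lemma hom_add: "hom m (p + q) = hom m p + hom m q"
  unfolding hom_def by (rule lext_add[where f = "\<lambda>\<mu> c. kap c * PhiM m \<mu>"]) (simp_all add: kap_add distrib_right)

lemma hom_single: "hom m (Poly_Mapping.single \<mu> c) = kap c * PhiM m \<mu>"
  unfolding hom_def by (rule lext_single[where f = "\<lambda>\<mu> c. kap c * PhiM m \<mu>"]) simp

lemma hom_zero[simp]: "hom m 0 = 0" by (simp add: hom_def)

lemma hom_sum: "hom m (sum f A) = (\<Sum>i\<in>A. hom m (f i))"
  by (induction A rule: infinite_finite_induct) (simp_all add: hom_add)

lemma hom_mult: "hom m (p * q) = hom m p * hom m q"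
proof (rule pm_induct_keys[where P = "\<lambda>p. hom m (p * q) = hom m p * hom m q" and p = p])
  fix p1 p2 :: "'a dpoly" assume "hom m (p1 * q) = hom m p1 * hom m q" "hom m (p2 * q) = hom m p2 * hom m q"
  then show "hom m ((p1 + p2) * q) = hom m (p1 + p2) * hom m q" by (simp add: distrib_right hom_add)
next
  fix \<mu> and a :: 'a
  show "hom m (Poly_Mapping.single \<mu> a * q) = hom m (Poly_Mapping.single \<mu> a) * hom m q"
  proof (rule pm_induct_keys[where P = "\<lambda>q. hom m (Poly_Mapping.single \<mu> a * q) = hom m (Poly_Mapping.single \<mu> a) * hom m q" and p = q])
    fix q1 q2 :: "'a dpoly" assume "hom m (Poly_Mapping.single \<mu> a * q1) = hom m (Poly_Mapping.single \<mu> a) * hom m q1"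
      "hom m (Poly_Mapping.single \<mu> a * q2) = hom m (Poly_Mapping.single \<mu> a) * hom m q2"
    then show "hom m (Poly_Mapping.single \<mu> a * (q1 + q2)) = hom m (Poly_Mapping.single \<mu> a) * hom m (q1 + q2)"
      by (simp add: distrib_left hom_add)
  next
    fix \<nu> and b :: 'a
    show "hom m (Poly_Mapping.single \<mu> a * Poly_Mapping.single \<nu> b) = hom m (Poly_Mapping.single \<mu> a) * hom m (Poly_Mapping.single \<nu> b)"
      by (simp add: mult_single hom_single kap_mult PhiM_add ac_simps)
  qed simp
qed simp

lemma hom_one[simp]: "hom m (1 :: 'k::comm_ring_1 dpoly) = 1"
proof -
  have "(1 :: 'k::comm_ring_1 dpoly) = Poly_Mapping.single 0 1" by simp
  then have "hom m (1 :: 'k dpoly) = hom m (Poly_Mapping.single 0 1)" by simp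
  then show ?thesis by (simp only: hom_single kap_one PhiM_zero mult_1_left)
qed

lemma hom_dscal: "hom m (dscal c p) = kap c * hom m p"
  by (simp add: dscal_def hom_mult hom_single)

lemma hom_dvar: "hom m (dvar n) = (P m n :: 'k::comm_ring_1 ev)"
  by (simp only: dvar_def hom_single kap_one PhiM_e1 mult_1_left)

lemma dderiv_lext: "dderiv p = (\<Sum>\<mu>\<in>Poly_Mapping.keys p. (\<lambda>\<mu> a. \<Sum>i\<in>Poly_Mapping.keys \<mu>.
      Poly_Mapping.single (\<mu> - e1 i + e1 (Suc i)) (a * of_nat (Poly_Mapping.lookup \<mu> i))) \<mu> (Poly_Mapping.lookup p \<mu>))"
  by (simp add: dderiv_def)

lemma dderiv_add: "dderiv (p + q) = dderiv p + dderiv q"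
  unfolding dderiv_lext by (rule lext_add) (simp_all add: distrib_right single_add sum.distrib)

lemma dderiv_zero[simp]: "dderiv 0 = 0" by (simp add: dderiv_def)

lemma dderiv_single: "dderiv (Poly_Mapping.single \<mu> a) = (\<Sum>i\<in>Poly_Mapping.keys \<mu>.
      Poly_Mapping.single (\<mu> - e1 i + e1 (Suc i)) (a * of_nat (Poly_Mapping.lookup \<mu> i)))"
  unfolding dderiv_lext by (rule lext_single) simp

lemma shift_key_add:
  assumes "i \<in> Poly_Mapping.keys \<mu>"
  shows "\<mu> - e1 i + e1 (Suc i) + \<nu> = \<mu> + \<nu> - e1 i + e1 (Suc i)"
  using assms by (intro poly_mapping_eqI) (auto simp: lookup_add lookup_minus lookup_single in_keys_iff when_def)

lemma dderiv_mult_single: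
  "dderiv (Poly_Mapping.single \<mu> a * Poly_Mapping.single \<nu> b) = dderiv (Poly_Mapping.single \<mu> a) * Poly_Mapping.single \<nu> b + Poly_Mapping.single \<mu> a * dderiv (Poly_Mapping.single \<nu> (b :: 'k::comm_ring_1))"
proof -
  let ?K = "Poly_Mapping.keys \<mu> \<union> Poly_Mapping.keys \<nu>"
  define g where "g i c = Poly_Mapping.single (\<mu> + \<nu> - e1 i + e1 (Suc i)) (c :: 'k)" for i c
  have fK: "finite ?K" by simp
  have L: "dderiv (Poly_Mapping.single \<mu> a * Poly_Mapping.single \<nu> b) = (\<Sum>i\<in>?K. g i (a * b * of_nat (Poly_Mapping.lookup \<mu> i)) + g i (a * b * of_nat (Poly_Mapping.lookup \<nu> i)))"
    by (simp add: mult_single dderiv_single keys_add_nat g_def lookup_add single_add distrib_left)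
  have A: "dderiv (Poly_Mapping.single \<mu> a) * Poly_Mapping.single \<nu> b = (\<Sum>i\<in>?K. g i (a * b * of_nat (Poly_Mapping.lookup \<mu> i)))"
  proof -
    have "dderiv (Poly_Mapping.single \<mu> a) * Poly_Mapping.single \<nu> b = (\<Sum>i\<in>Poly_Mapping.keys \<mu>. Poly_Mapping.single (\<mu> - e1 i + e1 (Suc i)) (a * of_nat (Poly_Mapping.lookup \<mu> i)) * Poly_Mapping.single \<nu> b)"
      by (simp only: dderiv_single sum_distrib_right)
    also have "\<dots> = (\<Sum>i\<in>Poly_Mapping.keys \<mu>. g i (a * b * of_nat (Poly_Mapping.lookup \<mu> i)))"
    proof (rule sum.cong[OF refl])
      fix i assume i: "i \<in> Poly_Mapping.keys \<mu>"
      show "Poly_Mapping.single (\<mu> - e1 i + e1 (Suc i)) (a * of_nat (Poly_Mapping.lookup \<mu> i)) * Poly_Mapping.single \<nu> b = g i (a * b * of_nat (Poly_Mapping.lookup \<mu> i))"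
        unfolding mult_single shift_key_add[OF i] g_def by (simp add: ac_simps)
    qed
    also have "\<dots> = (\<Sum>i\<in>?K. g i (a * b * of_nat (Poly_Mapping.lookup \<mu> i)))"
      by (rule sum.mono_neutral_left) (auto simp: g_def in_keys_iff)
    finally show ?thesis .
  qed
  have B: "Poly_Mapping.single \<mu> a * dderiv (Poly_Mapping.single \<nu> b) = (\<Sum>i\<in>?K. g i (a * b * of_nat (Poly_Mapping.lookup \<nu> i)))"
  proof -
    have "Poly_Mapping.single \<mu> a * dderiv (Poly_Mapping.single \<nu> b) = (\<Sum>i\<in>Poly_Mapping.keys \<nu>. Poly_Mapping.single \<mu> a * Poly_Mapping.single (\<nu> - e1 i + e1 (Suc i)) (b * of_nat (Poly_Mapping.lookup \<nu> i)))"
      by (simp only: dderiv_single sum_distrib_left)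
    also have "\<dots> = (\<Sum>i\<in>Poly_Mapping.keys \<nu>. g i (a * b * of_nat (Poly_Mapping.lookup \<nu> i)))"
    proof (rule sum.cong[OF refl])
      fix i assume i: "i \<in> Poly_Mapping.keys \<nu>"
      have k: "\<mu> + (\<nu> - e1 i + e1 (Suc i)) = \<mu> + \<nu> - e1 i + e1 (Suc i)"
        using shift_key_add[OF i, of \<mu>] by (simp add: add.commute)
      show "Poly_Mapping.single \<mu> a * Poly_Mapping.single (\<nu> - e1 i + e1 (Suc i)) (b * of_nat (Poly_Mapping.lookup \<nu> i)) = g i (a * b * of_nat (Poly_Mapping.lookup \<nu> i))"
        unfolding mult_single k g_def by (simp add: ac_simps)
    qed
    also have "\<dots> = (\<Sum>i\<in>?K. g i (a * b * of_nat (Poly_Mapping.lookup \<nu> i)))"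
      by (rule sum.mono_neutral_left) (auto simp: g_def in_keys_iff)
    finally show ?thesis .
  qed
  show ?thesis unfolding L A B by (simp add: sum.distrib)
qed

lemma dderiv_mult: "dderiv (p * q) = dderiv p * q + p * dderiv (q :: 'k::comm_ring_1 dpoly)"
proof (rule pm_induct_keys[where P = "\<lambda>p. dderiv (p * q) = dderiv p * q + p * dderiv q" and p = p])
  fix p1 p2 :: "'k dpoly" assume "dderiv (p1 * q) = dderiv p1 * q + p1 * dderiv q" "dderiv (p2 * q) = dderiv p2 * q + p2 * dderiv q"
  then show "dderiv ((p1 + p2) * q) = dderiv (p1 + p2) * q + (p1 + p2) * dderiv q"
    by (simp add: distrib_right dderiv_add)
next
  fix \<mu> and a :: 'k
  show "dderiv (Poly_Mapping.single \<mu> a * q) = dderiv (Poly_Mapping.single \<mu> a) * q + Poly_Mapping.single \<mu> a * dderiv q"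
  proof (rule pm_induct_keys[where P = "\<lambda>q. dderiv (Poly_Mapping.single \<mu> a * q) = dderiv (Poly_Mapping.single \<mu> a) * q + Poly_Mapping.single \<mu> a * dderiv q" and p = q])
    fix q1 q2 :: "'k dpoly"
    assume "dderiv (Poly_Mapping.single \<mu> a * q1) = dderiv (Poly_Mapping.single \<mu> a) * q1 + Poly_Mapping.single \<mu> a * dderiv q1"
      "dderiv (Poly_Mapping.single \<mu> a * q2) = dderiv (Poly_Mapping.single \<mu> a) * q2 + Poly_Mapping.single \<mu> a * dderiv q2"
    then show "dderiv (Poly_Mapping.single \<mu> a * (q1 + q2)) = dderiv (Poly_Mapping.single \<mu> a) * (q1 + q2) + Poly_Mapping.single \<mu> a * dderiv (q1 + q2)"
      by (simp add: distrib_left dderiv_add)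
  qed (simp_all add: dderiv_mult_single)
qed simp

lemma dderiv_e1: "dderiv (Poly_Mapping.single (e1 n) (1::'k::comm_ring_1)) = Poly_Mapping.single (e1 (Suc n)) 1"
  by (simp add: dderiv_single)

definition deg :: "(nat \<Rightarrow>\<^sub>0 nat) \<Rightarrow> nat" where
  "deg \<mu> = sum (Poly_Mapping.lookup \<mu>) (Poly_Mapping.keys \<mu>)"

lemma deg_add: "deg (\<mu> + \<nu>) = deg \<mu> + deg \<nu>"
proof -
  let ?K = "Poly_Mapping.keys \<mu> \<union> Poly_Mapping.keys \<nu>"
  have s: "deg x = sum (Poly_Mapping.lookup x) ?K" if "Poly_Mapping.keys x \<subseteq> ?K" for x
    unfolding deg_def by (rule sum.mono_neutral_left) (use that in \<open>auto simp: in_keys_iff\<close>)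
  show ?thesis by (simp add: s keys_add_nat lookup_add sum.distrib)
qed

lemma deg_e1[simp]: "deg (e1 n) = 1" by (simp add: deg_def)
lemma deg_e1'[simp]: "deg (Poly_Mapping.single n (Suc 0)) = 1" by (simp add: deg_def)

lemma deg_zero_iff: "deg \<mu> = 0 \<longleftrightarrow> \<mu> = 0"
  by (auto simp: deg_def in_keys_iff poly_mapping_eqI)

lemma hom_dderiv_single: "hom m (dderiv (Poly_Mapping.single \<mu> c)) = D (hom m (Poly_Mapping.single \<mu> (c :: 'k::comm_ring_1)))"
proof (induction "deg \<mu>" arbitrary: \<mu> c rule: less_induct)
  case less
  show ?case
  proof (cases "\<mu> = 0")
    case True then show ?thesis by (simp add: dderiv_single hom_single)
  next
    case False
    then have "Poly_Mapping.keys \<mu> \<noteq> {}" by (auto simp: in_keys_iff poly_mapping_eq_iff fun_eq_iff)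
    then obtain n where n: "n \<in> Poly_Mapping.keys \<mu>" by blast
    define \<mu>' where "\<mu>' = \<mu> - e1 n"
    have mu: "\<mu> = \<mu>' + e1 n" using n unfolding \<mu>'_def
      by (intro poly_mapping_eqI) (auto simp: lookup_add lookup_minus lookup_single in_keys_iff when_def)
    have dl: "deg \<mu>' < deg \<mu>" using mu by (simp add: deg_add)
    have sp: "Poly_Mapping.single \<mu> c = Poly_Mapping.single \<mu>' c * Poly_Mapping.single (e1 n) 1"
      by (simp add: mult_single mu)
    have y: "hom m (dderiv (Poly_Mapping.single (e1 n) (1::'k))) = D (hom m (Poly_Mapping.single (e1 n) 1))"
      by (simp only: dderiv_e1 hom_single kap_one PhiM_e1 mult_1_left D_P)
    show ?thesis unfolding sp dderiv_mult hom_add hom_mult less(1)[OF dl] y D_mult ..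
  qed
qed

lemma hom_dderiv: "hom m (dderiv p) = D (hom m (p :: 'k::comm_ring_1 dpoly))"
proof (rule pm_induct_keys[where P = "\<lambda>p. hom m (dderiv p) = D (hom m p)" and p = p])
  fix p1 p2 :: "'k dpoly" assume "hom m (dderiv p1) = D (hom m p1)" "hom m (dderiv p2) = D (hom m p2)"
  then show "hom m (dderiv (p1 + p2)) = D (hom m (p1 + p2))" by (simp add: dderiv_add hom_add D_add)
qed (simp_all add: hom_dderiv_single)

lemma keys_wedgeE:
  assumes "fin p" "fin q" "U \<in> Poly_Mapping.keys (wedge p q)"
  obtains S T where "U = S \<union> T" "S \<in> Poly_Mapping.keys p" "T \<in> Poly_Mapping.keys q" "S \<inter> T = {}"
proof -
  have "U \<in> {S \<union> T | S T. S \<in> Poly_Mapping.keys p \<and> T \<in> Poly_Mapping.keys q \<and> S \<inter> T = {}}"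
    using keys_wedge[OF assms(1,2)] assms(3) by (rule subsetD)
  then show ?thesis using that by (simp only: mem_Collect_eq) metis
qed

lemma zero_notin_keys_kplus: "p \<in> kplus \<Longrightarrow> 0 \<notin> Poly_Mapping.keys p"
  by (simp add: kplus_def in_keys_iff)

lemma sum_nat_pm_eq_0: "(a :: nat \<Rightarrow>\<^sub>0 nat) + b = 0 \<Longrightarrow> a = 0"
  by (metis add_is_0 lookup_add lookup_zero poly_mapping_eqI)

lemma kplus_mult: "p \<in> kplus \<Longrightarrow> q * p \<in> kplus"
proof -
  assume p: "p \<in> kplus"
  have "0 \<notin> Poly_Mapping.keys (q * p)"
  proof
    assume "0 \<in> Poly_Mapping.keys (q * p)"
    then obtain a b where "0 = a + b" "a \<in> Poly_Mapping.keys q" "b \<in> Poly_Mapping.keys p"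
      using keys_mult[of q p] by blast
    then have "b = 0" using sum_nat_pm_eq_0[of b a] by (simp add: add.commute)
    then show False using \<open>b \<in> _\<close> zero_notin_keys_kplus[OF p] by simp
  qed
  then show ?thesis by (simp add: kplus_def in_keys_iff)
qed

lemma kplus_add: "p \<in> kplus \<Longrightarrow> q \<in> kplus \<Longrightarrow> p + q \<in> kplus"
  by (simp add: kplus_def lookup_add)

lemma kplus_dscal: "p \<in> kplus \<Longrightarrow> dscal c p \<in> kplus"
  by (simp add: dscal_def kplus_mult)

lemma kplus_zero: "0 \<in> kplus" by (simp add: kplus_def)

lemma e1_ne0: "Poly_Mapping.single n (1::nat) \<noteq> 0"
proof
  assume "Poly_Mapping.single n (1::nat) = 0"
  then have "Poly_Mapping.lookup (Poly_Mapping.single n (1::nat)) n = 0" by simp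
  then show False by simp
qed

lemma kplus_dvar: "dvar n \<in> kplus"
  using e1_ne0[of n] by (simp add: kplus_def dvar_def lookup_single when_def)

lemma kplus_dvar_pow: "0 < k \<Longrightarrow> dvar n ^ k \<in> kplus"
proof (induction k)
  case (Suc k) then show ?case
    by (cases k) (simp_all add: kplus_dvar kplus_mult)
qed simp

lemma kplus_dderiv: "dderiv p \<in> kplus"
proof -
  have "0 \<notin> Poly_Mapping.keys (dderiv p)"
  proof
    assume "0 \<in> Poly_Mapping.keys (dderiv p)"
    then have "0 \<in> (\<Union>\<mu>\<in>Poly_Mapping.keys p. Poly_Mapping.keys (\<Sum>i\<in>Poly_Mapping.keys \<mu>.
      Poly_Mapping.single (\<mu> - e1 i + e1 (Suc i)) (Poly_Mapping.lookup p \<mu> * of_nat (Poly_Mapping.lookup \<mu> i))))"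
      unfolding dderiv_def by (rule subsetD[OF keys_sum])
    then obtain \<mu> where "0 \<in> Poly_Mapping.keys (\<Sum>i\<in>Poly_Mapping.keys \<mu>.
      Poly_Mapping.single (\<mu> - e1 i + e1 (Suc i)) (Poly_Mapping.lookup p \<mu> * of_nat (Poly_Mapping.lookup \<mu> i)))" by blast
    then have "0 \<in> (\<Union>i\<in>Poly_Mapping.keys \<mu>. Poly_Mapping.keys (Poly_Mapping.single (\<mu> - e1 i + e1 (Suc i)) (Poly_Mapping.lookup p \<mu> * of_nat (Poly_Mapping.lookup \<mu> i))))"
      by (rule subsetD[OF keys_sum])
    then obtain i where "0 \<in> Poly_Mapping.keys (Poly_Mapping.single (\<mu> - e1 i + e1 (Suc i)) (Poly_Mapping.lookup p \<mu> * of_nat (Poly_Mapping.lookup \<mu> i)))"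
      by blast
    then have "\<mu> - e1 i + e1 (Suc i) = 0" by (auto split: if_splits)
    then have "Poly_Mapping.lookup (\<mu> - e1 i + e1 (Suc i)) (Suc i) = 0" by simp
    then show False by (simp add: lookup_add)
  qed
  then show ?thesis by (simp add: kplus_def in_keys_iff)
qed

section \<open>nilpotency of omega\<close>

lemma pow_add_sq0:
  fixes S t :: "'a::comm_ring_1"
  assumes "t * t = 0"
  shows "(S + t) ^ Suc n = S ^ Suc n + of_nat (Suc n) * S ^ n * t"
proof (induction n)
  case 0 then show ?case by simp
next
  case (Suc n)
  have "(S + t) ^ Suc (Suc n) = (S + t) ^ Suc n * (S + t)"
    by (rule power_Suc2)
  also have "\<dots> = (S ^ Suc n + of_nat (Suc n) * S ^ n * t) * (S + t)"
    by (simp only: Suc)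
  also have "\<dots> = S ^ Suc (Suc n) + of_nat (Suc (Suc n)) * S ^ Suc n * t + of_nat (Suc n) * S ^ n * (t * t)"
    by (simp add: algebra_simps)
  finally show ?case using assms by simp
qed

lemma sum_sq0_nilp:
  fixes t :: "nat \<Rightarrow> 'a::comm_ring_1"
  assumes "\<And>l. l < k \<Longrightarrow> t l * t l = 0"
  shows "(\<Sum>l<k. t l) ^ Suc k = 0"
  using assms
proof (induction k)
  case 0 then show ?case by simp
next
  case (Suc k)
  have ih: "(\<Sum>l<k. t l) ^ Suc k = 0" using Suc by simp
  have "(\<Sum>l<Suc k. t l) ^ Suc (Suc k) = (\<Sum>l<k. t l) ^ Suc (Suc k) + of_nat (Suc (Suc k)) * (\<Sum>l<k. t l) ^ Suc k * t k"
    using pow_add_sq0[of "t k" "\<Sum>l<k. t l" "Suc k"] Suc.prems by simp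
  also have "\<dots> = 0" using ih by (simp add: power_Suc2 del: power_Suc)
  finally show ?case .
qed

lemma Ev_sq: "Ev l a b * Ev l a b = (0 :: 'k::comm_ring_1 ev)"
  by transfer (simp only: wedge_ext, simp add: ext_term_def)

lemma P0_pow: "0 < m \<Longrightarrow> P m 0 ^ m = (0 :: 'k::comm_ring_1 ev)"
proof -
  assume "0 < m"
  then have "m = Suc (m - 1)" by simp
  moreover have "P m 0 = (\<Sum>l<m - 1. Ev l 0 0 :: 'k ev)" by (simp add: P_def)
  moreover have "(\<Sum>l<m - 1. Ev l 0 0 :: 'k ev) ^ Suc (m - 1) = 0"
    by (rule sum_sq0_nilp) (rule Ev_sq)
  ultimately show ?thesis by simp
qed

definition good :: "nat \<Rightarrow> 'k::comm_ring_1 ev \<Rightarrow> bool" where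
  "good m x \<longleftrightarrow> (\<forall>S\<in>Poly_Mapping.keys (rep_ev x). S \<subseteq> basis_V m \<and> S \<noteq> {})"

lemma good_zero: "good m 0" by (simp add: good_def zero_ev.rep_eq)

lemma good_add:
  assumes gx: "good m x" and gy: "good m y"
  shows "good m (x + y)"
  unfolding good_def
proof
  fix S assume S: "S \<in> Poly_Mapping.keys (rep_ev (x + y))"
  have "S \<in> Poly_Mapping.keys (rep_ev x) \<union> Poly_Mapping.keys (rep_ev y)"
    using keys_add S unfolding plus_ev.rep_eq by (rule subsetD)
  then show "S \<subseteq> basis_V m \<and> S \<noteq> {}" using gx gy unfolding good_def by blast
qed

lemma good_mult: "good m x \<Longrightarrow> good m y \<Longrightarrow> good m (x * y)"
proof -
  assume gx: "good m x" and gy: "good m y"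
  show "good m (x * y)" unfolding good_def times_ev.rep_eq
  proof
    fix U assume U: "U \<in> Poly_Mapping.keys (wedge (rep_ev x) (rep_ev y))"
    have "fin (rep_ev x)" "fin (rep_ev y)" using rep_ev evn_fin by auto
    then obtain S T where "U = S \<union> T" "S \<in> Poly_Mapping.keys (rep_ev x)" "T \<in> Poly_Mapping.keys (rep_ev y)"
      using keys_wedgeE U by metis
    then show "U \<subseteq> basis_V m \<and> U \<noteq> {}" using gx gy by (auto simp: good_def)
  qed
qed

lemma good_kap_mult: "good m x \<Longrightarrow> good m (kap c * x)"
  unfolding good_def rep_kap_mult
  by (metis (no_types, lifting) lookup_gscal in_keys_iff mult_zero_right)

lemma good_sum: "(\<And>i. i \<in> A \<Longrightarrow> good m (f i)) \<Longrightarrow> good m (sum f A)"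
  by (induction A rule: infinite_finite_induct) (simp_all add: good_zero good_add)

lemma good_prod: "finite A \<Longrightarrow> A \<noteq> {} \<Longrightarrow> (\<And>i. i \<in> A \<Longrightarrow> good m (f i)) \<Longrightarrow> good m (prod f A)"
  by (induction A rule: finite_ne_induct) (simp_all add: good_mult)

lemma good_pow: "good m x \<Longrightarrow> 0 < k \<Longrightarrow> good m (x ^ k)"
proof (induction k)
  case (Suc k) then show ?case by (cases k) (simp_all add: good_mult)
qed simp

lemma good_Ev: "l < m - 1 \<Longrightarrow> good m (Ev l a b)"
  unfolding good_def Ev.rep_eq using keys_ext_term[of 1 "[xi l a, eta l b]"]
  by (auto simp: basis_V_def xi_def eta_def split: if_splits)

lemma of_nat_ev: "(of_nat k :: 'k::comm_ring_1 ev) = kap (of_nat k)"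
  by (induction k) (simp_all add: kap_add)

lemma good_P: "good m (P m n)"
  unfolding P_def
proof (intro good_sum)
  fix l a assume "l \<in> {..<m - 1}"
  then have "good m (Ev l a (n - a))" by (simp add: good_Ev)
  then show "good m (of_nat (n choose a) * Ev l a (n - a))" unfolding of_nat_ev by (rule good_kap_mult)
qed

abbreviation Ifam :: "nat \<Rightarrow> 'k::comm_ring_1 dpoly set set" where
  "Ifam m \<equiv> {I. I \<subseteq> kplus \<and> dvar 0 ^ m \<in> I \<and> 0 \<in> I
      \<and> (\<forall>p\<in>I. \<forall>q\<in>I. p + q \<in> I)
      \<and> (\<forall>c. \<forall>p\<in>I. dscal c p \<in> I)
      \<and> (\<forall>p\<in>I. \<forall>q\<in>kplus. q * p \<in> I)
      \<and> (\<forall>p\<in>I. dderiv p \<in> I)}"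

lemma I_mem: "p \<in> diff_ideal_gen m \<longleftrightarrow> (\<forall>J\<in>Ifam m. p \<in> J)"
  by (simp add: diff_ideal_gen_def)

lemma I_gen: "dvar 0 ^ m \<in> diff_ideal_gen m" by (auto simp: I_mem)
lemma I_zero: "0 \<in> diff_ideal_gen m" by (auto simp: I_mem)
lemma I_add: "p \<in> diff_ideal_gen m \<Longrightarrow> q \<in> diff_ideal_gen m \<Longrightarrow> p + q \<in> diff_ideal_gen m"
  by (auto simp: I_mem)
lemma I_dscal: "p \<in> diff_ideal_gen m \<Longrightarrow> dscal c p \<in> diff_ideal_gen m"
  by (auto simp: I_mem)
lemma I_mult: "p \<in> diff_ideal_gen m \<Longrightarrow> q \<in> kplus \<Longrightarrow> q * p \<in> diff_ideal_gen m"
  by (auto simp: I_mem)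
lemma I_dderiv: "p \<in> diff_ideal_gen m \<Longrightarrow> dderiv p \<in> diff_ideal_gen m"
  by (auto simp: I_mem)
lemma I_dderiv_pow: "(dderiv ^^ N) (dvar 0 ^ m) \<in> diff_ideal_gen m"
  by (induction N) (simp_all add: I_gen I_dderiv)

lemma dscal_single: "dscal c (Poly_Mapping.single \<nu> (a::'k::comm_ring_1)) = Poly_Mapping.single \<nu> (c * a)"
  by (simp add: dscal_def mult_single)

lemma I_single_mult: "p \<in> diff_ideal_gen m \<Longrightarrow> Poly_Mapping.single \<nu> c * p \<in> diff_ideal_gen m"
proof (cases "\<nu> = 0")
  case True
  assume "p \<in> diff_ideal_gen m"
  then show ?thesis using True I_dscal by (metis dscal_def)
next
  case False
  assume "p \<in> diff_ideal_gen m"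
  moreover have "Poly_Mapping.single \<nu> c \<in> kplus" using False by (simp add: kplus_def lookup_single when_def)
  ultimately show ?thesis by (rule I_mult)
qed

lemma I_sum: "(\<And>i. i \<in> A \<Longrightarrow> f i \<in> diff_ideal_gen m) \<Longrightarrow> sum f A \<in> diff_ideal_gen m"
  by (induction A rule: infinite_finite_induct) (simp_all add: I_zero I_add)

definition lin :: "(nat \<Rightarrow> nat) \<Rightarrow> (nat \<Rightarrow>\<^sub>0 nat) \<Rightarrow> nat" where
  "lin f \<mu> = (\<Sum>n\<in>Poly_Mapping.keys \<mu>. Poly_Mapping.lookup \<mu> n * f n)"

lemma lin_superset: "finite K \<Longrightarrow> Poly_Mapping.keys \<mu> \<subseteq> K \<Longrightarrow> lin f \<mu> = (\<Sum>n\<in>K. Poly_Mapping.lookup \<mu> n * f n)"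
  unfolding lin_def by (rule sum.mono_neutral_left) (auto simp: in_keys_iff)

lemma lin_add: "lin f (\<mu> + \<nu>) = lin f \<mu> + lin f \<nu>"
proof -
  let ?K = "Poly_Mapping.keys \<mu> \<union> Poly_Mapping.keys \<nu>"
  have "lin f (\<mu> + \<nu>) = (\<Sum>n\<in>?K. Poly_Mapping.lookup (\<mu> + \<nu>) n * f n)"
    by (rule lin_superset) (auto simp: keys_add_nat)
  also have "\<dots> = (\<Sum>n\<in>?K. Poly_Mapping.lookup \<mu> n * f n) + (\<Sum>n\<in>?K. Poly_Mapping.lookup \<nu> n * f n)"
    by (simp add: lookup_add sum.distrib distrib_right)
  also have "\<dots> = lin f \<mu> + lin f \<nu>" by (simp add: lin_superset[symmetric])
  finally show ?thesis .
qed

lemma lin_single[simp]: "lin f (Poly_Mapping.single n c) = c * f n"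
  by (cases "c = 0") (simp_all add: lin_def)

lemma lin_zero[simp]: "lin f 0 = 0" by (simp add: lin_def)

lemma deg_lin: "deg \<mu> = lin (\<lambda>_. 1) \<mu>" by (simp add: deg_def lin_def)

abbreviation wt where "wt \<equiv> lin (\<lambda>n. n)"
abbreviation sq where "sq \<equiv> lin (\<lambda>n. n * n)"

lemma le_pm_decomp:
  assumes "\<And>k. Poly_Mapping.lookup \<beta> k \<le> Poly_Mapping.lookup \<mu> k"
  shows "\<mu> = (\<mu> - \<beta>) + (\<beta> :: nat \<Rightarrow>\<^sub>0 nat)"
  using assms by (intro poly_mapping_eqI) (simp add: lookup_add lookup_minus)

lemma key_decomp: "i \<in> Poly_Mapping.keys \<mu> \<Longrightarrow> \<mu> = (\<mu> - e1 i) + e1 i"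
  by (rule le_pm_decomp) (auto simp: lookup_single when_def in_keys_iff)

lemma shift_lin:
  assumes "i \<in> Poly_Mapping.keys \<mu>"
  shows "lin f (\<mu> - e1 i + e1 (Suc i)) + f i = lin f \<mu> + f (Suc i)"
proof -
  have "lin f \<mu> = lin f (\<mu> - e1 i) + f i" using key_decomp[OF assms] lin_add
    by (metis lin_single mult_1)
  then show ?thesis by (simp add: lin_add)
qed

lemma lookup_dderiv: "Poly_Mapping.lookup (dderiv p) \<nu> = (\<Sum>\<mu>\<in>Poly_Mapping.keys p. \<Sum>i\<in>Poly_Mapping.keys \<mu>.
   (if \<mu> - e1 i + e1 (Suc i) = \<nu> then Poly_Mapping.lookup p \<mu> * of_nat (Poly_Mapping.lookup \<mu> i) else 0))"
  by (simp add: dderiv_def lookup_sum lookup_single when_def)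

lemma keys_dderiv: "\<nu> \<in> Poly_Mapping.keys (dderiv p) \<Longrightarrow> \<exists>\<mu>\<in>Poly_Mapping.keys p. \<exists>i\<in>Poly_Mapping.keys \<mu>. \<nu> = \<mu> - e1 i + e1 (Suc i)"
proof (rule ccontr)
  assume a: "\<nu> \<in> Poly_Mapping.keys (dderiv p)" and b: "\<not> (\<exists>\<mu>\<in>Poly_Mapping.keys p. \<exists>i\<in>Poly_Mapping.keys \<mu>. \<nu> = \<mu> - e1 i + e1 (Suc i))"
  have "Poly_Mapping.lookup (dderiv p) \<nu> = 0" unfolding lookup_dderiv
  proof (intro sum.neutral ballI)
    fix \<mu> i assume "\<mu> \<in> Poly_Mapping.keys p" "i \<in> Poly_Mapping.keys \<mu>"
    then have "\<mu> - e1 i + e1 (Suc i) \<noteq> \<nu>" using b by blast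
    then show "(if \<mu> - e1 i + e1 (Suc i) = \<nu> then Poly_Mapping.lookup p \<mu> * of_nat (Poly_Mapping.lookup \<mu> i) else 0) = 0" by simp
  qed
  then show False using a by (simp add: in_keys_iff)
qed

definition natc :: "'k::comm_ring_1 dpoly \<Rightarrow> bool" where
  "natc p \<longleftrightarrow> (\<forall>\<gamma>. \<exists>c::nat. Poly_Mapping.lookup p \<gamma> = of_nat c)"

lemma natc_dderiv_reach:
  fixes p :: "'k::field_char_0 dpoly"
  assumes "natc p"
  shows "natc (dderiv p)" "\<mu> \<in> Poly_Mapping.keys p \<Longrightarrow> i \<in> Poly_Mapping.keys \<mu> \<Longrightarrow> \<mu> - e1 i + e1 (Suc i) \<in> Poly_Mapping.keys (dderiv p)"
proof -
  obtain f where f: "\<And>\<gamma>. Poly_Mapping.lookup p \<gamma> = of_nat (f \<gamma>)" using assms unfolding natc_def by metis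
  define h where "h \<nu> = (\<Sum>\<mu>\<in>Poly_Mapping.keys p. \<Sum>i\<in>Poly_Mapping.keys \<mu>.
      (if \<mu> - e1 i + e1 (Suc i) = \<nu> then f \<mu> * Poly_Mapping.lookup \<mu> i else 0))" for \<nu>
  have lk: "Poly_Mapping.lookup (dderiv p) \<nu> = of_nat (h \<nu>)" for \<nu>
    by (simp add: lookup_dderiv h_def f of_nat_sum if_distrib cong: if_cong)
  then show "natc (dderiv p)" by (auto simp: natc_def)
  assume mu: "\<mu> \<in> Poly_Mapping.keys p" and i: "i \<in> Poly_Mapping.keys \<mu>"
  let ?\<nu> = "\<mu> - e1 i + e1 (Suc i)"
  have fpos: "f \<mu> > 0" using mu f[of \<mu>] by (auto simp: in_keys_iff)
  have ipos: "Poly_Mapping.lookup \<mu> i > 0" using i by (auto simp: in_keys_iff)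
  have "0 < f \<mu> * Poly_Mapping.lookup \<mu> i" using fpos ipos by simp
  also have "f \<mu> * Poly_Mapping.lookup \<mu> i \<le> (\<Sum>i'\<in>Poly_Mapping.keys \<mu>. (if \<mu> - e1 i' + e1 (Suc i') = ?\<nu> then f \<mu> * Poly_Mapping.lookup \<mu> i' else 0))"
    using member_le_sum[of i "Poly_Mapping.keys \<mu>" "\<lambda>i'. (if \<mu> - e1 i' + e1 (Suc i') = ?\<nu> then f \<mu> * Poly_Mapping.lookup \<mu> i' else 0)"] i
    by simp
  also have "\<dots> \<le> h ?\<nu>"
    unfolding h_def using member_le_sum[OF mu, of "\<lambda>\<mu>. \<Sum>i\<in>Poly_Mapping.keys \<mu>.
      (if \<mu> - e1 i + e1 (Suc i) = ?\<nu> then f \<mu> * Poly_Mapping.lookup \<mu> i else 0)"] by simp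
  finally show "?\<nu> \<in> Poly_Mapping.keys (dderiv p)" by (simp add: in_keys_iff lk)
qed


definition rN :: "nat \<Rightarrow> nat \<Rightarrow> 'k::comm_ring_1 dpoly" where
  "rN m N = (dderiv ^^ N) (dvar 0 ^ m)"

lemma dvar_pow: "dvar n ^ k = Poly_Mapping.single (Poly_Mapping.single n k) (1::'k::comm_ring_1)"
proof (induction k)
  case 0 then show ?case by simp
next
  case (Suc k)
  have "dvar n ^ Suc k = dvar n * dvar n ^ k" by simp
  also have "\<dots> = dvar n * Poly_Mapping.single (Poly_Mapping.single n k) (1::'k)" by (simp only: Suc)
  also have "\<dots> = Poly_Mapping.single (e1 n + Poly_Mapping.single n k) (1::'k)" by (simp only: dvar_def mult_single mult_1)
  also have "e1 n + Poly_Mapping.single n k = Poly_Mapping.single n (Suc k)" by (simp add: single_add[symmetric])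
  finally show ?case .
qed

lemma rN_Suc: "rN m (Suc N) = dderiv (rN m N)" by (simp add: rN_def)

lemma rN_keys: "\<gamma> \<in> Poly_Mapping.keys (rN m N :: 'k::comm_ring_1 dpoly) \<Longrightarrow> deg \<gamma> = m \<and> wt \<gamma> = N"
proof (induction N arbitrary: \<gamma>)
  case 0 then show ?case by (simp add: rN_def dvar_pow deg_lin split: if_splits)
next
  case (Suc N)
  then obtain \<mu> i where mu: "\<mu> \<in> Poly_Mapping.keys (rN m N :: 'k dpoly)" "i \<in> Poly_Mapping.keys \<mu>" "\<gamma> = \<mu> - e1 i + e1 (Suc i)"
    using keys_dderiv by (metis rN_Suc)
  have "deg \<mu> = m" "wt \<mu> = N" using Suc.IH[OF mu(1)] by auto
  then show ?case using shift_lin[OF mu(2), of "\<lambda>_. 1"] shift_lin[OF mu(2), of "\<lambda>n. n"] mu(3)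
    by (simp add: deg_lin)
qed

lemma rN_natc: "natc (rN m N :: 'k::field_char_0 dpoly)"
proof (induction N)
  case 0 then show ?case
    by (auto simp: natc_def rN_def dvar_pow lookup_single when_def intro: exI[of _ 0] exI[of _ 1])
next
  case (Suc N) then show ?case by (simp add: rN_Suc natc_dderiv_reach(1))
qed

definition beta :: "nat \<Rightarrow> nat \<Rightarrow> nat \<Rightarrow>\<^sub>0 nat" where
  "beta m N = Poly_Mapping.single (N div m) (m - N mod m) + Poly_Mapping.single (Suc (N div m)) (N mod m)"

lemma lookup_beta: "Poly_Mapping.lookup (beta m N) k = (if k = N div m then m - N mod m else if k = Suc (N div m) then N mod m else 0)"
  by (simp add: beta_def lookup_add lookup_single when_def)

lemma beta_Suc:
  assumes "0 < m"
  shows "beta m (Suc N) = beta m N - e1 (N div m) + e1 (Suc (N div m))"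
proof (rule poly_mapping_eqI)
  fix k
  have s: "N mod m < m" using assms by simp
  show "Poly_Mapping.lookup (beta m (Suc N)) k = Poly_Mapping.lookup (beta m N - e1 (N div m) + e1 (Suc (N div m))) k"
  proof (cases "Suc (N mod m) = m")
    case True
    then have "Suc N mod m = 0" "Suc N div m = Suc (N div m)" by (simp_all add: mod_Suc div_Suc)
    moreover have "m - N mod m = 1" using True by simp
    ultimately show ?thesis using True by (simp add: lookup_beta lookup_add lookup_minus lookup_single when_def)
  next
    case False
    then have "Suc N mod m = Suc (N mod m)" "Suc N div m = N div m" by (simp_all add: mod_Suc div_Suc)
    then show ?thesis using False s by (simp add: lookup_beta lookup_add lookup_minus lookup_single when_def)
  qed
qed

lemma beta_key: "0 < m \<Longrightarrow> beta m N \<in> Poly_Mapping.keys (rN m N :: 'k::field_char_0 dpoly)"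
proof (induction N)
  case 0
  have "beta m 0 = Poly_Mapping.single 0 m" by (simp add: beta_def)
  then show ?case by (simp add: rN_def dvar_pow)
next
  case (Suc N)
  have "N div m \<in> Poly_Mapping.keys (beta m N)" using Suc.prems mod_less_divisor[OF Suc.prems, of N] by (simp add: in_keys_iff lookup_beta)
  then show ?case using natc_dderiv_reach(2)[OF rN_natc Suc.IH[OF Suc.prems]] Suc.prems
    by (simp add: rN_Suc beta_Suc)
qed

lemma deg_beta: "0 < m \<Longrightarrow> deg (beta m N) = m" by (simp add: beta_def deg_lin lin_add)
lemma wt_beta: "0 < m \<Longrightarrow> wt (beta m N) = N"
proof -
  assume m: "0 < m"
  have "wt (beta m N) = (m - N mod m) * (N div m) + N mod m * Suc (N div m)" by (simp add: beta_def lin_add)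
  also have "\<dots> = m * (N div m) + N mod m" using m by (simp add: algebra_simps diff_mult_distrib)
  also have "\<dots> = N" by simp
  finally show ?thesis .
qed


lemma lin_int_id:
  "int (sq \<gamma>) + int (a * (a + 1)) * int (deg \<gamma>) = int (2 * a + 1) * int (wt \<gamma>)
     + (\<Sum>n\<in>Poly_Mapping.keys \<gamma>. int (Poly_Mapping.lookup \<gamma> n) * ((int n - int a) * (int n - int a - 1)))"
proof -
  have "int (sq \<gamma>) + int (a * (a + 1)) * int (deg \<gamma>) = (\<Sum>n\<in>Poly_Mapping.keys \<gamma>. int (Poly_Mapping.lookup \<gamma> n) * (int n * int n + int a * (int a + 1)))"
    by (simp add: lin_def deg_def of_nat_sum sum_distrib_left sum_distrib_right sum.distrib algebra_simps)
  also have "\<dots> = (\<Sum>n\<in>Poly_Mapping.keys \<gamma>. int (Poly_Mapping.lookup \<gamma> n) * ((2 * int a + 1) * int n) + int (Poly_Mapping.lookup \<gamma> n) * ((int n - int a) * (int n - int a - 1)))"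
    by (rule sum.cong) (simp_all add: algebra_simps)
  also have "\<dots> = int (2 * a + 1) * int (wt \<gamma>) + (\<Sum>n\<in>Poly_Mapping.keys \<gamma>. int (Poly_Mapping.lookup \<gamma> n) * ((int n - int a) * (int n - int a - 1)))"
  proof -
    have X: "(\<Sum>n\<in>Poly_Mapping.keys \<gamma>. int (Poly_Mapping.lookup \<gamma> n) * ((2 * int a + 1) * int n)) = int (2 * a + 1) * int (wt \<gamma>)"
      by (simp add: lin_def of_nat_sum sum_distrib_left algebra_simps)
    show ?thesis by (simp only: sum.distrib X)
  qed
  finally show ?thesis .
qed

lemma int_consec_nonneg: "0 \<le> (x::int) * (x - 1)"
  by (cases "x \<le> 0") (simp_all add: mult_nonpos_nonpos)

lemma lin_two: "Poly_Mapping.keys \<gamma> \<subseteq> {a, Suc a} \<Longrightarrow> lin f \<gamma> = Poly_Mapping.lookup \<gamma> a * f a + Poly_Mapping.lookup \<gamma> (Suc a) * f (Suc a)"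
  by (subst lin_superset[of "{a, Suc a}"]) simp_all

lemma beta_min:
  assumes m: "0 < m" and d: "deg \<gamma> = m" and w: "wt \<gamma> = N"
  shows "sq (beta m N) \<le> sq \<gamma> \<and> (sq \<gamma> = sq (beta m N) \<longrightarrow> \<gamma> = beta m N)"
proof -
  define a where "a = N div m"
  define s where "s = N mod m"
  define h where "h n = (int n - int a) * (int n - int a - 1)" for n
  define H where "H \<gamma> = (\<Sum>n\<in>Poly_Mapping.keys \<gamma>. int (Poly_Mapping.lookup \<gamma> n) * h n)" for \<gamma>
  have hn: "0 \<le> h n" for n unfolding h_def using int_consec_nonneg[of "int n - int a"] by (simp add: algebra_simps)
  have Hn: "0 \<le> H \<gamma>" unfolding H_def by (intro sum_nonneg) (simp add: hn)
  have Hb: "H (beta m N) = 0"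
  proof -
    have "Poly_Mapping.keys (beta m N) \<subseteq> {a, Suc a}" by (auto simp: in_keys_iff lookup_beta a_def split: if_splits)
    then show ?thesis unfolding H_def by (intro sum.neutral) (auto simp: h_def)
  qed
  have eqg: "int (sq \<gamma>) + int (a * (a + 1)) * int m = int (2 * a + 1) * int N + H \<gamma>"
    using lin_int_id[of \<gamma> a] d w by (simp add: H_def h_def)
  have eqb: "int (sq (beta m N)) + int (a * (a + 1)) * int m = int (2 * a + 1) * int N + H (beta m N)"
    using lin_int_id[of "beta m N" a] deg_beta[OF m] wt_beta[OF m] by (simp add: H_def h_def)
  have le: "sq (beta m N) \<le> sq \<gamma>" using eqg eqb Hb Hn by linarith
  moreover have "\<gamma> = beta m N" if eq: "sq \<gamma> = sq (beta m N)"
  proof -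
    have "H \<gamma> = 0" using eqg eqb Hb eq by linarith
    then have z: "\<forall>n\<in>Poly_Mapping.keys \<gamma>. int (Poly_Mapping.lookup \<gamma> n) * h n = 0"
      unfolding H_def by (subst (asm) sum_nonneg_eq_0_iff) (auto simp: hn)
    have ks: "Poly_Mapping.keys \<gamma> \<subseteq> {a, Suc a}"
    proof
      fix n assume n: "n \<in> Poly_Mapping.keys \<gamma>"
      then have "h n = 0" using z by (auto simp: in_keys_iff)
      then show "n \<in> {a, Suc a}" unfolding h_def by auto
    qed
    have dg: "Poly_Mapping.lookup \<gamma> a + Poly_Mapping.lookup \<gamma> (Suc a) = m"
      using lin_two[OF ks, of "\<lambda>_. 1"] d by (simp add: deg_lin)
    have wg: "Poly_Mapping.lookup \<gamma> a * a + Poly_Mapping.lookup \<gamma> (Suc a) * Suc a = N"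
      using lin_two[OF ks, of "\<lambda>n. n"] w by simp
    have N: "N = m * a + s" by (simp add: a_def s_def)
    have "m * a + Poly_Mapping.lookup \<gamma> (Suc a) = N" using dg wg by (simp add: algebra_simps flip: dg)
    then have g1: "Poly_Mapping.lookup \<gamma> (Suc a) = s" using N by simp
    then have g0: "Poly_Mapping.lookup \<gamma> a = m - s" using dg by simp
    show ?thesis
    proof (rule poly_mapping_eqI)
      fix k show "Poly_Mapping.lookup \<gamma> k = Poly_Mapping.lookup (beta m N) k"
        using ks g0 g1 by (auto simp: lookup_beta a_def s_def in_keys_iff)
    qed
  qed
  ultimately show ?thesis by blast
qed


section \<open>Spanning by standard monomials\<close>

definition standard :: "nat \<Rightarrow> (nat \<Rightarrow>\<^sub>0 nat) \<Rightarrow> bool" where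
  "standard m \<mu> \<longleftrightarrow> (\<forall>a. Poly_Mapping.lookup \<mu> a + Poly_Mapping.lookup \<mu> (Suc a) < m)"

definition Std :: "nat \<Rightarrow> 'k::comm_ring_1 dpoly set" where
  "Std m = {q. \<forall>\<nu>\<in>Poly_Mapping.keys q. \<nu> \<noteq> 0 \<and> standard m \<nu>}"

lemma lookup_dscal: "Poly_Mapping.lookup (dscal c p) \<nu> = c * Poly_Mapping.lookup p \<nu>"
  unfolding dscal_def mult_map_scale_conv_mult[symmetric] by transfer (simp add: when_def)

lemma Std_zero: "0 \<in> Std m" by (simp add: Std_def)

lemma Std_add:
  assumes "q1 \<in> Std m" "q2 \<in> Std m"
  shows "q1 + q2 \<in> Std m"
  unfolding Std_def mem_Collect_eq
proof
  fix \<nu> assume "\<nu> \<in> Poly_Mapping.keys (q1 + q2)"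
  then have "\<nu> \<in> Poly_Mapping.keys q1 \<union> Poly_Mapping.keys q2" by (rule subsetD[OF keys_add])
  then show "\<nu> \<noteq> 0 \<and> standard m \<nu>" using assms unfolding Std_def by blast
qed

lemma Std_dscal: "q \<in> Std m \<Longrightarrow> dscal c q \<in> Std m"
  unfolding Std_def by (auto simp: in_keys_iff lookup_dscal)

lemma Std_sum: "(\<And>i. i \<in> A \<Longrightarrow> f i \<in> Std m) \<Longrightarrow> sum f A \<in> Std m"
  by (induction A rule: infinite_finite_induct) (simp_all add: Std_zero Std_add)

lemma dscal_add: "dscal c (p + q) = dscal c p + dscal c q" by (simp add: dscal_def distrib_left)

lemma dscal_minus_one: "dscal (-1) p = - (p :: 'k::comm_ring_1 dpoly)"
  by (rule poly_mapping_eqI) (simp add: lookup_dscal)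

lemma sq_le_wt: "sq \<rho> \<le> wt \<rho> * wt \<rho>"
proof -
  have n: "n \<le> wt \<rho>" if "n \<in> Poly_Mapping.keys \<rho>" for n
  proof -
    have "n \<le> Poly_Mapping.lookup \<rho> n * n" using that by (auto simp: in_keys_iff)
    also have "\<dots> \<le> wt \<rho>" unfolding lin_def by (rule member_le_sum[OF that]) simp_all
    finally show ?thesis .
  qed
  have "sq \<rho> \<le> (\<Sum>n\<in>Poly_Mapping.keys \<rho>. Poly_Mapping.lookup \<rho> n * (n * wt \<rho>))"
    unfolding lin_def by (intro sum_mono mult_le_mono2 mult_le_mono2) (simp add: n[unfolded lin_def])
  also have "\<dots> = wt \<rho> * wt \<rho>" by (simp add: lin_def sum_distrib_right mult.assoc)
  finally show ?thesis .
qed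

lemma nonstandard_beta:
  assumes "0 < m" "\<not> standard m \<mu>"
  obtains N where "\<And>k. Poly_Mapping.lookup (beta m N) k \<le> Poly_Mapping.lookup \<mu> k"
proof -
  obtain a where a: "m \<le> Poly_Mapping.lookup \<mu> a + Poly_Mapping.lookup \<mu> (Suc a)"
    using assms(2) unfolding standard_def by (auto simp: not_less)
  show ?thesis
  proof (cases "m \<le> Poly_Mapping.lookup \<mu> (Suc a)")
    case True
    have d: "(m * Suc a) div m = Suc a" "(m * Suc a) mod m = 0" using assms(1) by simp_all
    show ?thesis by (rule that[of "m * Suc a"]) (use True in \<open>simp add: lookup_beta d\<close>)
  next
    case False
    have d: "(m * a + Poly_Mapping.lookup \<mu> (Suc a)) div m = a" "(m * a + Poly_Mapping.lookup \<mu> (Suc a)) mod m = Poly_Mapping.lookup \<mu> (Suc a)"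
      using False by simp_all
    show ?thesis by (rule that[of "m * a + Poly_Mapping.lookup \<mu> (Suc a)"]) (use False a in \<open>auto simp add: lookup_beta d\<close>)
  qed
qed

lemma span_mono:
  fixes \<mu> :: "nat \<Rightarrow>\<^sub>0 nat"
  assumes m: "0 < m"
  shows "\<mu> \<noteq> 0 \<Longrightarrow> \<exists>q r. Poly_Mapping.single \<mu> (1::'k::field_char_0) = q + r \<and> q \<in> Std m \<and> r \<in> diff_ideal_gen m"
proof (induction "wt \<mu> * wt \<mu> - sq \<mu>" arbitrary: \<mu> rule: less_induct)
  case less
  show ?case
  proof (cases "standard m \<mu>")
    case True
    then show ?thesis using less.prems
      by (intro exI[of _ "Poly_Mapping.single \<mu> 1"] exI[of _ 0]) (simp add: Std_def I_zero)
  next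
    case False
    obtain N where Nle: "\<And>k. Poly_Mapping.lookup (beta m N) k \<le> Poly_Mapping.lookup \<mu> k"
      using nonstandard_beta[OF m False] by blast
    define \<beta> where "\<beta> = beta m N"
    define \<nu> where "\<nu> = \<mu> - \<beta>"
    have mu: "\<mu> = \<nu> + \<beta>" unfolding \<nu>_def \<beta>_def by (rule le_pm_decomp) (rule Nle)
    define r :: "'k dpoly" where "r = rN m N"
    define c where "c = Poly_Mapping.lookup r \<beta>"
    have c: "c \<noteq> 0" using beta_key[OF m, of N] by (simp add: c_def r_def \<beta>_def in_keys_iff)
    define R where "R = r - Poly_Mapping.single \<beta> c"
    have rI: "r \<in> diff_ideal_gen m" by (simp add: r_def rN_def I_dderiv_pow)
    have RR: "R = (\<Sum>\<gamma>\<in>Poly_Mapping.keys R. Poly_Mapping.single \<gamma> (Poly_Mapping.lookup R \<gamma>))" by (rule pm_expand)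
    have Rkeys: "\<gamma> \<in> Poly_Mapping.keys R \<Longrightarrow> \<gamma> \<in> Poly_Mapping.keys r \<and> \<gamma> \<noteq> \<beta>" for \<gamma>
      by (auto simp: R_def in_keys_iff lookup_minus lookup_single c_def when_def split: if_splits)
    have smono: "\<nu> + \<gamma> \<noteq> 0 \<and> wt (\<nu> + \<gamma>) * wt (\<nu> + \<gamma>) - sq (\<nu> + \<gamma>) < wt \<mu> * wt \<mu> - sq \<mu>"
      if g: "\<gamma> \<in> Poly_Mapping.keys R" for \<gamma>
    proof -
      have gr: "\<gamma> \<in> Poly_Mapping.keys (rN m N :: 'k dpoly)" "\<gamma> \<noteq> \<beta>" using Rkeys[OF g] by (simp_all add: r_def)
      have dg: "deg \<gamma> = m" "wt \<gamma> = N" using rN_keys[OF gr(1)] by auto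
      have sqlt: "sq \<beta> < sq \<gamma>" using beta_min[OF m dg] gr(2) by (auto simp: \<beta>_def)
      have wb: "wt \<beta> = N" by (simp add: \<beta>_def wt_beta m)
      have "deg (\<nu> + \<gamma>) \<noteq> 0" using dg m by (simp add: deg_add)
      then have ne: "\<nu> + \<gamma> \<noteq> 0" by (auto simp: deg_zero_iff)
      have w: "wt (\<nu> + \<gamma>) = wt \<mu>" using mu dg wb by (simp add: lin_add)
      have sqm: "sq \<mu> < sq (\<nu> + \<gamma>)" using mu sqlt by (simp add: lin_add)
      have "sq (\<nu> + \<gamma>) \<le> wt \<mu> * wt \<mu>" using sq_le_wt[of "\<nu> + \<gamma>"] w by simp
      then show ?thesis using ne w sqm by simp
    qed
    have "\<forall>\<gamma>\<in>Poly_Mapping.keys R. \<exists>q r. Poly_Mapping.single (\<nu> + \<gamma>) (1::'k) = q + r \<and> q \<in> Std m \<and> r \<in> diff_ideal_gen m"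
      using less.hyps smono by blast
    then obtain Q RI where QR: "\<And>\<gamma>. \<gamma> \<in> Poly_Mapping.keys R \<Longrightarrow> Poly_Mapping.single (\<nu> + \<gamma>) (1::'k) = Q \<gamma> + RI \<gamma> \<and> Q \<gamma> \<in> Std m \<and> RI \<gamma> \<in> diff_ideal_gen m"
      by metis
    define d where "d \<gamma> = - Poly_Mapping.lookup R \<gamma> / c" for \<gamma>
    have sR: "Poly_Mapping.single \<nu> (1 / c) * R = (\<Sum>\<gamma>\<in>Poly_Mapping.keys R. Poly_Mapping.single (\<nu> + \<gamma>) (Poly_Mapping.lookup R \<gamma> / c))"
      by (subst RR) (simp add: sum_distrib_left mult_single)
    have "Poly_Mapping.single \<mu> 1 = Poly_Mapping.single \<nu> (1 / c) * (r - R)"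
      using c by (simp add: R_def mult_single mu)
    also have "\<dots> = Poly_Mapping.single \<nu> (1 / c) * r + (\<Sum>\<gamma>\<in>Poly_Mapping.keys R. dscal (d \<gamma>) (Poly_Mapping.single (\<nu> + \<gamma>) 1))"
      by (simp add: right_diff_distrib sR dscal_single d_def sum_negf[symmetric] single_uminus)
    also have "\<dots> = (\<Sum>\<gamma>\<in>Poly_Mapping.keys R. dscal (d \<gamma>) (Q \<gamma>)) + (Poly_Mapping.single \<nu> (1 / c) * r + (\<Sum>\<gamma>\<in>Poly_Mapping.keys R. dscal (d \<gamma>) (RI \<gamma>)))"
      by (simp add: QR dscal_add sum.distrib)
    finally have eq: "Poly_Mapping.single \<mu> 1 = \<dots>" .
    show ?thesis
    proof (intro exI conjI)
      show "Poly_Mapping.single \<mu> 1 = (\<Sum>\<gamma>\<in>Poly_Mapping.keys R. dscal (d \<gamma>) (Q \<gamma>)) + (Poly_Mapping.single \<nu> (1 / c) * r + (\<Sum>\<gamma>\<in>Poly_Mapping.keys R. dscal (d \<gamma>) (RI \<gamma>)))"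
        by (rule eq)
      show "(\<Sum>\<gamma>\<in>Poly_Mapping.keys R. dscal (d \<gamma>) (Q \<gamma>)) \<in> Std m"
        by (intro Std_sum Std_dscal) (simp add: QR)
      show "Poly_Mapping.single \<nu> (1 / c) * r + (\<Sum>\<gamma>\<in>Poly_Mapping.keys R. dscal (d \<gamma>) (RI \<gamma>)) \<in> diff_ideal_gen m"
        by (intro I_add I_single_mult rI I_sum I_dscal) (simp add: QR)
    qed
  qed
qed

lemma span:
  fixes p :: "'k::field_char_0 dpoly"
  assumes m: "0 < m" and p: "p \<in> kplus"
  shows "\<exists>q r. p = q + r \<and> q \<in> Std m \<and> r \<in> diff_ideal_gen m"
proof -
  have "\<forall>\<mu>\<in>Poly_Mapping.keys p. \<exists>q r. Poly_Mapping.single \<mu> (1::'k) = q + r \<and> q \<in> Std m \<and> r \<in> diff_ideal_gen m"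
    using span_mono[OF m] zero_notin_keys_kplus[OF p] by metis
  then obtain Q RI where QR: "\<And>\<mu>. \<mu> \<in> Poly_Mapping.keys p \<Longrightarrow> Poly_Mapping.single \<mu> (1::'k) = Q \<mu> + RI \<mu> \<and> Q \<mu> \<in> Std m \<and> RI \<mu> \<in> diff_ideal_gen m"
    by metis
  have "p = (\<Sum>\<mu>\<in>Poly_Mapping.keys p. dscal (Poly_Mapping.lookup p \<mu>) (Poly_Mapping.single \<mu> 1))"
    by (subst pm_expand) (simp add: dscal_single)
  also have "\<dots> = (\<Sum>\<mu>\<in>Poly_Mapping.keys p. dscal (Poly_Mapping.lookup p \<mu>) (Q \<mu>)) + (\<Sum>\<mu>\<in>Poly_Mapping.keys p. dscal (Poly_Mapping.lookup p \<mu>) (RI \<mu>))"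
    by (simp add: QR dscal_add sum.distrib)
  finally show ?thesis
    by (intro exI conjI, assumption) (intro Std_sum Std_dscal I_sum I_dscal; simp add: QR)+
qed

section \<open>Rearrangement\<close>

type_synonym trip = "nat \<times> nat \<times> nat"

definition pA :: "trip \<Rightarrow> nat \<times> nat" where "pA t = (fst t, fst (snd t))"
definition pB :: "trip \<Rightarrow> nat \<times> nat" where "pB t = (fst t, snd (snd t))"
definition wq :: "trip \<Rightarrow> nat" where "wq t = (fst (snd t) + snd (snd t)) * (fst (snd t) + snd (snd t))"
definition mono0 :: "trip set \<Rightarrow> bool" where
  "mono0 Y0 \<longleftrightarrow> (\<forall>l a b a' b'. (l,a,b) \<in> Y0 \<longrightarrow> (l,a',b') \<in> Y0 \<longrightarrow> a < a' \<longrightarrow> b < b')"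

definition rcond :: "trip set \<Rightarrow> trip set \<Rightarrow> bool" where
  "rcond Y Y0 \<longleftrightarrow> finite Y \<and> finite Y0 \<and> pA ` Y = pA ` Y0 \<and> pB ` Y = pB ` Y0 \<and> inj_on pA Y \<and> inj_on pB Y
     \<and> inj_on pA Y0 \<and> inj_on pB Y0 \<and> mono0 Y0"

lemma swap_ineq:
  assumes "a2 < a1" "b1 < (b2::nat)"
  shows "(a1+b1)*(a1+b1) + (a2+b2)*(a2+b2) < (a1+b2)*(a1+b2) + (a2+b1)*(a2+b1)"
proof -
  obtain d where d: "a1 = a2 + d" "0 < d" using assms(1) less_imp_add_positive by blast
  obtain e where e: "b2 = b1 + e" "0 < e" using assms(2) less_imp_add_positive by blast
  define s where "s = a2 + b1"
  have "(a1+b2)*(a1+b2) + (a2+b1)*(a2+b1) = (a1+b1)*(a1+b1) + (a2+b2)*(a2+b2) + 2*d*e"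
    unfolding d e by (simp add: algebra_simps)
  moreover have "0 < 2*d*e" using d e by simp
  ultimately show ?thesis by linarith
qed

lemma rcond_remove:
  assumes "rcond Y Y0" "t \<in> Y" "t \<in> Y0"
  shows "rcond (Y - {t}) (Y0 - {t})"
proof -
  have A: "pA ` (Y - {t}) = pA ` Y - {pA t}" "pA ` (Y0 - {t}) = pA ` Y0 - {pA t}"
    "pB ` (Y - {t}) = pB ` Y - {pB t}" "pB ` (Y0 - {t}) = pB ` Y0 - {pB t}"
    using assms inj_on_image_set_diff[of pA Y Y "{t}"] inj_on_image_set_diff[of pA Y0 Y0 "{t}"]
      inj_on_image_set_diff[of pB Y Y "{t}"] inj_on_image_set_diff[of pB Y0 Y0 "{t}"]
    by (simp_all add: rcond_def)
  have m: "mono0 (Y0 - {t})" using assms(1) unfolding rcond_def mono0_def by blast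
  have i: "inj_on pA (Y - {t})" "inj_on pB (Y - {t})" "inj_on pA (Y0 - {t})" "inj_on pB (Y0 - {t})"
    using assms(1) unfolding rcond_def by (meson Diff_subset inj_on_subset)+
  show ?thesis using assms(1) m i unfolding rcond_def A by simp
qed

lemma rearr:
  "rcond Y Y0 \<Longrightarrow> sum wq Y \<le> sum wq Y0 \<and> (sum wq Y = sum wq Y0 \<longrightarrow> Y = Y0)"
proof (induction "card Y0" arbitrary: Y Y0 rule: less_induct)
  case less
  note rc = less.prems
  have fin: "finite Y" "finite Y0" using rc by (auto simp: rcond_def)
  show ?case
  proof (cases "Y0 = {}")
    case True
    then have "Y = {}" using rc by (auto simp: rcond_def)
    then show ?thesis using True by simp
  next
    case False
    then obtain l a0 b0 where t0: "(l,a0,b0) \<in> Y0" by (metis prod_cases3 ex_in_conv)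
    define Al where "Al = {a. \<exists>b. (l,a,b) \<in> Y0}"
    have fAl: "finite Al"
    proof -
      have "Al \<subseteq> (\<lambda>t. fst (snd t)) ` Y0" by (force simp: Al_def)
      then show ?thesis using fin finite_subset by blast
    qed
    have neAl: "Al \<noteq> {}" using t0 by (auto simp: Al_def)
    define as where "as = Max Al"
    have asA: "as \<in> Al" using fAl neAl by (simp add: as_def)
    then obtain bs where ts: "(l, as, bs) \<in> Y0" by (auto simp: Al_def)
    have maxa: "a \<le> as" if "(l,a,b) \<in> Y0" for a b
    proof -
      have "a \<in> Al" using that by (auto simp: Al_def)
      then show ?thesis using fAl by (simp add: as_def)
    qed
    have maxb: "b \<le> bs" if tb: "(l,a,b) \<in> Y0" for a b
    proof (cases "a < as")
      case True then show ?thesis using rc tb ts by (auto simp: rcond_def mono0_def intro: less_imp_le)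
    next
      case False
      then have "a = as" using maxa[OF tb] by simp
      moreover have "inj_on pA Y0" using rc by (simp add: rcond_def)
      ultimately have "(l,a,b) = (l,as,bs)" using tb ts unfolding inj_on_def pA_def by fastforce
      then show ?thesis by simp
    qed
    let ?ts = "(l, as, bs)"
    have sub: "sum wq Y' \<le> sum wq Y0 \<and> (sum wq Y' = sum wq Y0 \<longrightarrow> Y' = Y0)" if r': "rcond Y' Y0" and tP': "?ts \<in> Y'" for Y'
    proof -
      have r1: "rcond (Y' - {?ts}) (Y0 - {?ts})" by (rule rcond_remove[OF r' tP' ts])
      have c: "card (Y0 - {?ts}) < card Y0" using ts fin by (meson card_Diff1_less)
      note ih = less.hyps[OF c r1]
      have fP': "finite Y'" using r' by (simp add: rcond_def)
      have s1: "sum wq Y' = wq ?ts + sum wq (Y' - {?ts})" using tP' fP' by (simp add: sum.remove)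
      have s2: "sum wq Y0 = wq ?ts + sum wq (Y0 - {?ts})" using ts fin by (simp add: sum.remove)
      show ?thesis
      proof
        show "sum wq Y' \<le> sum wq Y0" using ih s1 s2 by simp
        show "sum wq Y' = sum wq Y0 \<longrightarrow> Y' = Y0"
        proof
          assume "sum wq Y' = sum wq Y0"
          then have "Y' - {?ts} = Y0 - {?ts}" using ih s1 s2 by simp
          then show "Y' = Y0" using tP' ts by blast
        qed
      qed
    qed
    have "pA ?ts \<in> pA ` Y0" using ts by blast
    then have "(l, as) \<in> pA ` Y" using rc by (simp add: rcond_def pA_def)
    then obtain b1 where t1: "(l, as, b1) \<in> Y" by (auto simp: pA_def)
    have "pB ?ts \<in> pB ` Y0" using ts by blast
    then have "(l, bs) \<in> pB ` Y" using rc by (simp add: rcond_def pB_def)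
    then obtain a2 where t2: "(l, a2, bs) \<in> Y" by (auto simp: pB_def)
    show ?thesis
    proof (cases "b1 = bs")
      case True
      then show ?thesis using sub[OF rc] t1 by simp
    next
      case False
      let ?t1 = "(l, as, b1)" and ?t2 = "(l, a2, bs)" and ?t3 = "(l, a2, b1)"
      have ne12: "?t1 \<noteq> ?t2" using False by simp
      have a2ne: "a2 \<noteq> as"
      proof
        assume "a2 = as"
        then have "pA ?t1 = pA ?t2" by (simp add: pA_def)
        then have "?t1 = ?t2" using rc t1 t2 by (auto simp: rcond_def inj_on_def)
        then show False using ne12 by simp
      qed
      have "pA ?t2 \<in> pA ` Y" using t2 by blast
      then have "(l, a2) \<in> pA ` Y0" using rc by (simp add: rcond_def pA_def)
      then obtain bb where "(l, a2, bb) \<in> Y0" by (auto simp: pA_def)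
      then have a2lt: "a2 < as" using maxa a2ne by (metis le_neq_implies_less)
      have "pB ?t1 \<in> pB ` Y" using t1 by blast
      then have "(l, b1) \<in> pB ` Y0" using rc by (simp add: rcond_def pB_def)
      then obtain aa where "(l, aa, b1) \<in> Y0" by (auto simp: pB_def)
      then have b1lt: "b1 < bs" using maxb False by (metis le_neq_implies_less)
      define R where "R = Y - {?t1, ?t2}"
      define Y2 where "Y2 = insert ?ts (insert ?t3 R)"
      have injA: "inj_on pA Y" and injB: "inj_on pB Y" using rc by (auto simp: rcond_def)
      have tsR: "?ts \<notin> R"
      proof
        assume "?ts \<in> R"
        then have "?ts \<in> Y" "?ts \<noteq> ?t1" using False by (auto simp: R_def)
        moreover have "pA ?ts = pA ?t1" by (simp add: pA_def)
        ultimately show False using injA t1 by (auto simp: inj_on_def)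
      qed
      have t3R: "?t3 \<notin> R"
      proof
        assume "?t3 \<in> R"
        then have "?t3 \<in> Y" "?t3 \<noteq> ?t2" using False by (auto simp: R_def)
        moreover have "pA ?t3 = pA ?t2" by (simp add: pA_def)
        ultimately show False using injA t2 by (auto simp: inj_on_def)
      qed
      have ts3: "?ts \<noteq> ?t3" using a2lt by simp
      have imA: "pA ` Y2 = pA ` Y"
      proof -
        have "Y = insert ?t1 (insert ?t2 R)" using t1 t2 by (auto simp: R_def)
        then show ?thesis by (simp add: Y2_def pA_def)
      qed
      have imB: "pB ` Y2 = pB ` Y"
      proof -
        have "Y = insert ?t1 (insert ?t2 R)" using t1 t2 by (auto simp: R_def)
        then show ?thesis by (auto simp: Y2_def pB_def)
      qed
      have RA: "pA t \<noteq> (l, as) \<and> pA t \<noteq> (l, a2)" if "t \<in> R" for t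
      proof -
        have "t \<in> Y" "t \<noteq> ?t1" "t \<noteq> ?t2" using that by (auto simp: R_def)
        then show ?thesis using injA t1 t2 by (auto simp: inj_on_def pA_def)
      qed
      have RB: "pB t \<noteq> (l, bs) \<and> pB t \<noteq> (l, b1)" if "t \<in> R" for t
      proof -
        have "t \<in> Y" "t \<noteq> ?t1" "t \<noteq> ?t2" using that by (auto simp: R_def)
        then show ?thesis using injB t1 t2 by (auto simp: inj_on_def pB_def)
      qed
      have injR: "inj_on pA R" "inj_on pB R" using injA injB by (auto simp: R_def intro: inj_on_subset)
      have inj2A: "inj_on pA Y2" unfolding Y2_def using injR RA a2lt by (auto simp: pA_def)
      have inj2B: "inj_on pB Y2" unfolding Y2_def using injR RB b1lt by (auto simp: pB_def)
      have r2: "rcond Y2 Y0" using rc imA imB inj2A inj2B fin by (simp add: rcond_def Y2_def R_def)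
      have "sum wq Y2 \<le> sum wq Y0" using sub[OF r2] by (simp add: Y2_def)
      moreover have "sum wq Y < sum wq Y2"
      proof -
        have fR: "finite R" using fin by (simp add: R_def)
        have "sum wq Y = wq ?t1 + wq ?t2 + sum wq R"
        proof -
          have Ye: "Y = insert ?t1 (insert ?t2 R)" using t1 t2 by (auto simp: R_def)
          have n1: "?t1 \<notin> insert ?t2 R" using ne12 by (simp add: R_def)
          have n2: "?t2 \<notin> R" by (simp add: R_def)
          have "sum wq (insert ?t1 (insert ?t2 R)) = wq ?t1 + (wq ?t2 + sum wq R)"
            using fR n1 n2 by simp
          then show ?thesis using Ye by simp
        qed
        moreover have "sum wq Y2 = wq ?ts + wq ?t3 + sum wq R"
          using fR tsR t3R ts3 by (simp add: Y2_def)
        moreover have "wq ?t1 + wq ?t2 < wq ?ts + wq ?t3"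
          using swap_ineq[OF a2lt b1lt] by (simp add: wq_def)
        ultimately show ?thesis by simp
      qed
      ultimately show ?thesis by simp
    qed
  qed
qed

definition Lt :: "trip \<Rightarrow> gidx set" where "Lt t = {xi (fst t) (fst (snd t)), eta (fst t) (snd (snd t))}"
definition EvT :: "trip \<Rightarrow> 'k::comm_ring_1 ev" where "EvT t = Ev (fst t) (fst (snd t)) (snd (snd t))"
definition Fs :: "(nat \<Rightarrow>\<^sub>0 nat) \<Rightarrow> (nat \<times> nat) set" where
  "Fs \<nu> = Sigma (Poly_Mapping.keys \<nu>) (\<lambda>n. {..<Poly_Mapping.lookup \<nu> n})"
definition Ch :: "nat \<Rightarrow> nat \<Rightarrow> (nat \<times> nat) set" where "Ch m n = {..<m - 1} \<times> {..n}"
definition tr :: "nat \<times> nat \<Rightarrow> nat \<times> nat \<Rightarrow> trip" where "tr x c = (fst c, snd c, fst x - snd c)"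
definition cf :: "(nat \<times> nat) set \<Rightarrow> (nat \<times> nat \<Rightarrow> nat \<times> nat) \<Rightarrow> nat" where
  "cf A g = (\<Prod>x\<in>A. (fst x choose snd (g x)))"

lemma finite_Fs[simp]: "finite (Fs \<nu>)" by (simp add: Fs_def)
lemma finite_Ch[simp]: "finite (Ch m n)" by (simp add: Ch_def)

lemma P_Ch: "P m n = (\<Sum>c\<in>Ch m n. of_nat (n choose snd c) * EvT (tr x c)) " if "fst x = n"
  using that by (simp add: P_def Ch_def EvT_def tr_def sum.cartesian_product case_prod_beta)

lemma PhiM_Fs: "PhiM m \<nu> = (\<Prod>x\<in>Fs \<nu>. P m (fst x))"
proof -
  have "PhiM m \<nu> = (\<Prod>n\<in>Poly_Mapping.keys \<nu>. \<Prod>j\<in>{..<Poly_Mapping.lookup \<nu> n}. P m n)"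
    by (simp add: PhiM_def)
  also have "\<dots> = (\<Prod>x\<in>Fs \<nu>. P m (fst x))"
    unfolding Fs_def by (subst prod.Sigma) (auto simp: case_prod_beta)
  finally show ?thesis .
qed

lemma PhiM_expand:
  "PhiM m \<nu> = (\<Sum>g\<in>PiE (Fs \<nu>) (\<lambda>x. Ch m (fst x)). of_nat (cf (Fs \<nu>) g) * (\<Prod>x\<in>Fs \<nu>. EvT (tr x (g x)) :: 'k::comm_ring_1 ev))"
proof -
  have "PhiM m \<nu> = (\<Prod>x\<in>Fs \<nu>. \<Sum>c\<in>Ch m (fst x). of_nat (fst x choose snd c) * (EvT (tr x c) :: 'k ev))"
    unfolding PhiM_Fs by (rule prod.cong[OF refl]) (rule P_Ch, rule refl)
  also have "\<dots> = (\<Sum>g\<in>PiE (Fs \<nu>) (\<lambda>x. Ch m (fst x)). \<Prod>x\<in>Fs \<nu>. of_nat (fst x choose snd (g x)) * (EvT (tr x (g x)) :: 'k ev))"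
    by (rule prod_sum_PiE) simp_all
  also have "\<dots> = (\<Sum>g\<in>PiE (Fs \<nu>) (\<lambda>x. Ch m (fst x)). of_nat (cf (Fs \<nu>) g) * (\<Prod>x\<in>Fs \<nu>. EvT (tr x (g x)) :: 'k ev))"
    by (simp add: prod.distrib cf_def of_nat_prod)
  finally show ?thesis .
qed

lemma keys_EvT: "Poly_Mapping.keys (rep_ev (EvT t :: 'k::comm_ring_1 ev)) \<subseteq> {Lt t}"
  using keys_ext_term[of "1::'k" "[xi (fst t) (fst (snd t)), eta (fst t) (snd (snd t))]"]
  by (auto simp: EvT_def Ev.rep_eq Lt_def split: if_splits)

lemma keys_prod_EvT:
  assumes "finite A"
  shows "S \<in> Poly_Mapping.keys (rep_ev (\<Prod>x\<in>A. EvT (t x) :: 'k::comm_ring_1 ev)) \<Longrightarrow>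
     S = (\<Union>x\<in>A. Lt (t x)) \<and> (\<forall>x\<in>A. \<forall>y\<in>A. x \<noteq> y \<longrightarrow> Lt (t x) \<inter> Lt (t y) = {})"
  using assms
proof (induction A arbitrary: S rule: finite_induct)
  case empty
  then show ?case by (simp add: one_ev.rep_eq split: if_splits)
next
  case (insert x A)
  have "S \<in> Poly_Mapping.keys (wedge (rep_ev (EvT (t x) :: 'k ev)) (rep_ev (\<Prod>x\<in>A. EvT (t x) :: 'k ev)))"
    using insert by (simp add: times_ev.rep_eq)
  moreover have "fin (rep_ev (EvT (t x) :: 'k ev))" "fin (rep_ev (\<Prod>x\<in>A. EvT (t x) :: 'k ev))"
    using rep_ev evn_fin by auto
  ultimately obtain S1 S2 where s: "S = S1 \<union> S2" "S1 \<in> Poly_Mapping.keys (rep_ev (EvT (t x) :: 'k ev))"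
    "S2 \<in> Poly_Mapping.keys (rep_ev (\<Prod>x\<in>A. EvT (t x) :: 'k ev))" "S1 \<inter> S2 = {}"
    using keys_wedgeE by metis
  have S1: "S1 = Lt (t x)" using s(2) keys_EvT by blast
  note ih = insert.IH[OF s(3)]
  have d: "Lt (t x) \<inter> Lt (t y) = {}" if "y \<in> A" for y using s(4) S1 ih that by blast
  show ?case
  proof
    show "S = (\<Union>x\<in>insert x A. Lt (t x))" using s(1) S1 ih by simp
    show "\<forall>xa\<in>insert x A. \<forall>y\<in>insert x A. xa \<noteq> y \<longrightarrow> Lt (t xa) \<inter> Lt (t y) = {}"
      using ih d by blast
  qed
qed

lemma neg_one_pow_cases: "(-1::'k::comm_ring_1) ^ n = 1 \<or> (-1::'k) ^ n = -1"
  by (induction n) auto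

lemma val_prod_EvT:
  assumes "finite A" "\<forall>x\<in>A. \<forall>y\<in>A. x \<noteq> y \<longrightarrow> Lt (t x) \<inter> Lt (t y) = {}"
  shows "\<exists>e. (e = 1 \<or> e = -1) \<and> rep_ev (\<Prod>x\<in>A. EvT (t x) :: 'k::comm_ring_1 ev) = Poly_Mapping.single (\<Union>x\<in>A. Lt (t x)) e"
  using assms
proof (induction A rule: finite_induct)
  case empty then show ?case by (auto simp: one_ev.rep_eq)
next
  case (insert x A)
  then obtain e where e: "e = 1 \<or> e = -1" "rep_ev (\<Prod>x\<in>A. EvT (t x) :: 'k ev) = Poly_Mapping.single (\<Union>x\<in>A. Lt (t x)) e"
    by blast
  define S where "S = (\<Union>x\<in>A. Lt (t x))"
  have fS: "finite S" using insert(1) by (simp add: S_def Lt_def)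
  define L where "L = [xi (fst (t x)) (fst (snd (t x))), eta (fst (t x)) (snd (snd (t x)))]"
  have sL: "set L = Lt (t x)" by (simp add: L_def Lt_def)
  have disj: "Lt (t x) \<inter> S = {}" using insert.prems insert(2) by (auto simp: S_def)
  have dL: "distinct (L @ sorted_list_of_set S)" using disj fS sL by (auto simp: L_def xi_def eta_def)
  have "rep_ev (\<Prod>x\<in>insert x A. EvT (t x) :: 'k ev) = wedge (ext_term 1 L) (ext_term e (sorted_list_of_set S))"
    using insert(1,2) e(2) ext_term_sorted[OF fS, of e] by (simp add: times_ev.rep_eq EvT_def Ev.rep_eq L_def S_def)
  also have "\<dots> = Poly_Mapping.single (Lt (t x) \<union> S) (e * perm_sign (L @ sorted_list_of_set S))"
    by (simp only: wedge_ext mult_1_left ext_term_distinct[OF dL]) (simp add: sL fS)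
  finally show ?case using e(1) neg_one_pow_cases[of "inv (L @ sorted_list_of_set S)"]
    by (auto simp: perm_sign_inv S_def intro!: exI[of _ "e * perm_sign (L @ sorted_list_of_set S)"])
qed

definition pre :: "(nat \<Rightarrow>\<^sub>0 nat) \<Rightarrow> nat \<Rightarrow> nat" where "pre \<mu> n = (\<Sum>i<n. Poly_Mapping.lookup \<mu> i)"
definition pos :: "(nat \<Rightarrow>\<^sub>0 nat) \<Rightarrow> nat \<times> nat \<Rightarrow> nat" where "pos \<mu> x = pre \<mu> (fst x) + snd x"
definition c0 :: "nat \<Rightarrow> (nat \<Rightarrow>\<^sub>0 nat) \<Rightarrow> nat \<times> nat \<Rightarrow> nat \<times> nat" where
  "c0 m \<mu> x = (pos \<mu> x mod (m - 1), fst x div 2)"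
definition t0 :: "nat \<Rightarrow> (nat \<Rightarrow>\<^sub>0 nat) \<Rightarrow> nat \<times> nat \<Rightarrow> trip" where
  "t0 m \<mu> x = tr x (c0 m \<mu> x)"

lemma t0_eq: "t0 m \<mu> x = (pos \<mu> x mod (m - 1), fst x div 2, fst x - fst x div 2)"
  by (simp add: t0_def c0_def tr_def)

lemma pre_Suc: "pre \<mu> (Suc n) = pre \<mu> n + Poly_Mapping.lookup \<mu> n" by (simp add: pre_def)

lemma pre_mono: "n \<le> n' \<Longrightarrow> pre \<mu> n \<le> pre \<mu> n'"
  unfolding pre_def by (rule sum_mono2) auto

lemma Fs_iff: "x \<in> Fs \<mu> \<longleftrightarrow> snd x < Poly_Mapping.lookup \<mu> (fst x)"
  by (cases x) (auto simp: Fs_def in_keys_iff)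

lemma pos_lt:
  assumes "x \<in> Fs \<mu>" "y \<in> Fs \<mu>" "fst x < fst y"
  shows "pos \<mu> x < pos \<mu> y"
proof -
  have "pos \<mu> x < pre \<mu> (Suc (fst x))" using assms(1) by (simp add: pos_def pre_Suc Fs_iff)
  also have "\<dots> \<le> pre \<mu> (fst y)" using assms(3) by (intro pre_mono) simp
  also have "\<dots> \<le> pos \<mu> y" by (simp add: pos_def)
  finally show ?thesis .
qed

lemma pos_inj:
  assumes "x \<in> Fs \<mu>" "y \<in> Fs \<mu>" "pos \<mu> x = pos \<mu> y"
  shows "x = y"
proof (cases "fst x = fst y")
  case True then show ?thesis using assms(3) by (cases x, cases y) (simp add: pos_def)
next
  case False
  then have "fst x < fst y \<or> fst y < fst x" by arith
  then show ?thesis using pos_lt[OF assms(1,2)] pos_lt[OF assms(2,1)] assms(3) by auto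
qed

lemma mod_window:
  fixes a b p k :: nat
  assumes "a \<noteq> b" "p \<le> a" "a < p + k" "p \<le> b" "b < p + k"
  shows "a mod k \<noteq> b mod k"
proof
  assume eq: "a mod k = b mod k"
  show False
  proof (cases "a < b")
    case True
    then have "k dvd b - a" using eq mod_eq_dvd_iff_nat[of a b k] by simp
    moreover have "0 < b - a" using True by simp
    ultimately have "k \<le> b - a" by (rule dvd_imp_le)
    then show False using assms by arith
  next
    case False
    then have "b < a" using assms(1) by simp
    then have "k dvd a - b" using eq mod_eq_dvd_iff_nat[of b a k] by simp
    moreover have "0 < a - b" using \<open>b < a\<close> by simp
    ultimately have "k \<le> a - b" by (rule dvd_imp_le)
    then show False using assms by arith
  qed
qed

lemma pos_window:
  assumes "x \<in> Fs \<mu>" "fst x = c \<or> fst x = Suc c"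
  shows "pre \<mu> c \<le> pos \<mu> x \<and> pos \<mu> x < pre \<mu> c + (Poly_Mapping.lookup \<mu> c + Poly_Mapping.lookup \<mu> (Suc c))"
  using assms by (auto simp: pos_def pre_Suc Fs_iff)

lemma col_distinct:
  assumes m: "2 \<le> m" and st: "standard m \<mu>"
    and x: "x \<in> Fs \<mu>" and y: "y \<in> Fs \<mu>" and ne: "x \<noteq> y"
    and cx: "fst x = c \<or> fst x = Suc c" and cy: "fst y = c \<or> fst y = Suc c"
  shows "pos \<mu> x mod (m - 1) \<noteq> pos \<mu> y mod (m - 1)"
proof -
  have w: "Poly_Mapping.lookup \<mu> c + Poly_Mapping.lookup \<mu> (Suc c) \<le> m - 1"
    using st m unfolding standard_def by (metis Suc_pred' less_Suc_eq_le not_numeral_le_zero not_gr_zero)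
  have "pos \<mu> x \<noteq> pos \<mu> y" using pos_inj[OF x y] ne by blast
  then show ?thesis using pos_window[OF x cx] pos_window[OF y cy] w
    by (intro mod_window) auto
qed

lemma Lt_inter:
  "Lt (l, a, b) \<inter> Lt (l', a', b') \<noteq> {} \<longleftrightarrow> (l = l' \<and> a = a') \<or> (l = l' \<and> b = b')"
  by (auto simp: Lt_def xi_def eta_def)

lemma t0_disjoint:
  assumes m: "2 \<le> m" and st: "standard m \<mu>"
    and x: "x \<in> Fs \<mu>" and y: "y \<in> Fs \<mu>" and ne: "x \<noteq> y"
  shows "Lt (t0 m \<mu> x) \<inter> Lt (t0 m \<mu> y) = {}"
proof (rule ccontr)
  assume "Lt (t0 m \<mu> x) \<inter> Lt (t0 m \<mu> y) \<noteq> {}"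
  then have h: "pos \<mu> x mod (m - 1) = pos \<mu> y mod (m - 1)"
    "fst x div 2 = fst y div 2 \<or> fst x - fst x div 2 = fst y - fst y div 2"
    unfolding t0_eq Lt_inter by auto
  define c where "c = min (fst x) (fst y)"
  have "fst x = c \<or> fst x = Suc c" "fst y = c \<or> fst y = Suc c"
    using h(2) unfolding c_def by arith+
  then show False using col_distinct[OF m st x y ne] h(1) by blast
qed

lemma Lt_ne: "Lt t \<noteq> {}" by (simp add: Lt_def)

lemma disj_inj:
  assumes "\<forall>x\<in>A. \<forall>y\<in>A. x \<noteq> y \<longrightarrow> Lt (t x) \<inter> Lt (t y) = {}"
  shows "inj_on t A"
  using assms Lt_ne by (metis inf.idem inj_onI)

lemma disj_injA:
  assumes "\<forall>x\<in>A. \<forall>y\<in>A. x \<noteq> y \<longrightarrow> Lt (t x) \<inter> Lt (t y) = {}"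
  shows "inj_on pA (t ` A)"
proof (rule inj_onI)
  fix u v assume "u \<in> t ` A" "v \<in> t ` A" "pA u = pA v"
  then obtain x y where "x \<in> A" "y \<in> A" "u = t x" "v = t y" by blast
  moreover have "Lt u \<inter> Lt v \<noteq> {}" using \<open>pA u = pA v\<close>
    by (cases u, cases v) (simp add: Lt_inter pA_def)
  ultimately show "u = v" using assms by metis
qed

lemma disj_injB:
  assumes "\<forall>x\<in>A. \<forall>y\<in>A. x \<noteq> y \<longrightarrow> Lt (t x) \<inter> Lt (t y) = {}"
  shows "inj_on pB (t ` A)"
proof (rule inj_onI)
  fix u v assume "u \<in> t ` A" "v \<in> t ` A" "pB u = pB v"
  then obtain x y where "x \<in> A" "y \<in> A" "u = t x" "v = t y" by blast
  moreover have "Lt u \<inter> Lt v \<noteq> {}" using \<open>pB u = pB v\<close>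
    by (cases u, cases v) (simp add: Lt_inter pB_def)
  ultimately show "u = v" using assms by metis
qed

lemma pA_image: "pA ` (t ` A) = {(l, a). xi l a \<in> (\<Union>x\<in>A. Lt (t x))}"
  by (auto simp: pA_def Lt_def xi_def eta_def image_iff)

lemma pB_image: "pB ` (t ` A) = {(l, b). eta l b \<in> (\<Union>x\<in>A. Lt (t x))}"
  by (auto simp: pB_def Lt_def xi_def eta_def image_iff)

lemma sq_Fs: "sq \<nu> = (\<Sum>x\<in>Fs \<nu>. fst x * fst x)"
proof -
  have "(\<Sum>x\<in>Fs \<nu>. fst x * fst x) = (\<Sum>n\<in>Poly_Mapping.keys \<nu>. \<Sum>j<Poly_Mapping.lookup \<nu> n. n * n)"
    unfolding Fs_def by (subst sum.Sigma) (auto simp: case_prod_beta)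
  also have "\<dots> = sq \<nu>" by (simp add: lin_def)
  finally show ?thesis by simp
qed

lemma count_Fs: "card {x\<in>Fs \<nu>. fst x = n} = Poly_Mapping.lookup \<nu> n"
proof -
  have "{x\<in>Fs \<nu>. fst x = n} = {n} \<times> {..<Poly_Mapping.lookup \<nu> n}"
    by (auto simp: Fs_iff)
  then show ?thesis by (simp add: card_cartesian_product)
qed

definition sab :: "trip \<Rightarrow> nat" where "sab t = fst (snd t) + snd (snd t)"

lemma eq_from_images:
  assumes "inj_on t (Fs \<nu>)" "inj_on t' (Fs \<mu>)" "t ` Fs \<nu> = t' ` Fs \<mu>"
    "\<And>x. x \<in> Fs \<nu> \<Longrightarrow> sab (t x) = fst x" "\<And>x. x \<in> Fs \<mu> \<Longrightarrow> sab (t' x) = fst x"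
  shows "\<nu> = \<mu>"
proof (rule poly_mapping_eqI)
  fix n
  have "Poly_Mapping.lookup \<nu> n = card (t ` {x\<in>Fs \<nu>. fst x = n})"
    using count_Fs[of \<nu> n] card_image[OF inj_on_subset[OF assms(1)], of "{x\<in>Fs \<nu>. fst x = n}"] by auto
  also have "t ` {x\<in>Fs \<nu>. fst x = n} = {u \<in> t ` Fs \<nu>. sab u = n}" using assms(4) by auto
  also have "\<dots> = {u \<in> t' ` Fs \<mu>. sab u = n}" using assms(3) by simp
  also have "\<dots> = t' ` {x\<in>Fs \<mu>. fst x = n}" using assms(5) by auto
  also have "card \<dots> = Poly_Mapping.lookup \<mu> n"
    using count_Fs[of \<mu> n] card_image[OF inj_on_subset[OF assms(2)], of "{x\<in>Fs \<mu>. fst x = n}"] by auto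
  finally show "Poly_Mapping.lookup \<nu> n = Poly_Mapping.lookup \<mu> n" .
qed

lemma good_PhiM: "\<mu> \<noteq> 0 \<Longrightarrow> good m (PhiM m \<mu>)"
proof -
  assume "\<mu> \<noteq> 0"
  then have ne: "Poly_Mapping.keys \<mu> \<noteq> {}" by (auto simp: in_keys_iff poly_mapping_eq_iff fun_eq_iff)
  show ?thesis unfolding PhiM_def
    by (rule good_prod[OF finite_keys ne]) (simp add: good_pow good_P in_keys_iff)
qed

lemma good_hom: "p \<in> kplus \<Longrightarrow> good m (hom m p)"
  unfolding hom_def
  by (intro good_sum good_kap_mult good_PhiM) (auto simp: kplus_def in_keys_iff)

lemma hom_Lambda0: "p \<in> kplus \<Longrightarrow> rep_ev (hom m p) \<in> Lambda0 m"
proof -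
  assume p: "p \<in> kplus"
  have e: "evn (rep_ev (hom m p))" using rep_ev by auto
  show ?thesis using good_hom[OF p, of m] e unfolding Lambda0_def good_def evn_def by blast
qed

lemma hom_pow: "hom m (x ^ k) = hom m (x :: 'k::comm_ring_1 dpoly) ^ k"
  by (induction k) (simp_all add: hom_mult)

lemma ideal_sub_ker:
  assumes "0 < m" "p \<in> diff_ideal_gen m"
  shows "p \<in> kplus \<and> rep_ev (hom m p :: 'k::comm_ring_1 ev) = 0"
proof -
  define K where "K = {p :: 'k dpoly. p \<in> kplus \<and> rep_ev (hom m p) = 0}"
  have "K \<subseteq> kplus \<and> dvar 0 ^ m \<in> K \<and> 0 \<in> K
      \<and> (\<forall>p\<in>K. \<forall>q\<in>K. p + q \<in> K)
      \<and> (\<forall>c. \<forall>p\<in>K. dscal c p \<in> K)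
      \<and> (\<forall>p\<in>K. \<forall>q\<in>kplus. q * p \<in> K)
      \<and> (\<forall>p\<in>K. dderiv p \<in> K)"
  proof (intro conjI ballI allI)
    show "K \<subseteq> kplus" by (auto simp: K_def)
    have "hom m (dvar 0 ^ m :: 'k dpoly) = P m 0 ^ m" by (simp add: hom_dvar hom_pow)
    then show "dvar 0 ^ m \<in> K"
      using assms(1) by (simp add: K_def kplus_dvar_pow P0_pow zero_ev.rep_eq)
    show "0 \<in> K" by (simp add: K_def kplus_zero zero_ev.rep_eq)
    fix p assume pK: "p \<in> K"
    then have p: "p \<in> kplus" "hom m p = 0" by (auto simp: K_def rep_ev_inject zero_ev.rep_eq[symmetric])
    { fix q assume "q \<in> K"
      then have q: "q \<in> kplus" "hom m q = 0" by (auto simp: K_def rep_ev_inject zero_ev.rep_eq[symmetric])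
      show "p + q \<in> K" using p q by (simp add: K_def kplus_add hom_add zero_ev.rep_eq) }
    { fix c show "dscal c p \<in> K" using p by (simp add: K_def kplus_dscal hom_dscal zero_ev.rep_eq) }
    { fix q :: "'k dpoly" assume "q \<in> kplus"
      show "q * p \<in> K" using p by (simp add: K_def kplus_mult hom_mult zero_ev.rep_eq) }
    show "dderiv p \<in> K" using p by (simp add: K_def kplus_dderiv hom_dderiv zero_ev.rep_eq)
  qed
  then have "diff_ideal_gen m \<subseteq> K" unfolding diff_ideal_gen_def by (intro Inter_lower) simp
  then show ?thesis using assms(2) by (auto simp: K_def)
qed



section \<open>Independence\<close>

definition T0 :: "nat \<Rightarrow> (nat \<Rightarrow>\<^sub>0 nat) \<Rightarrow> gidx set" where
  "T0 m \<mu> = (\<Union>x\<in>Fs \<mu>. Lt (t0 m \<mu> x))"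

lemma wq_tr: "snd c \<le> fst x \<Longrightarrow> wq (tr x c) = fst x * fst x \<and> sab (tr x c) = fst x"
  by (simp add: wq_def tr_def sab_def)

lemma Ch_le: "c \<in> Ch m n \<Longrightarrow> snd c \<le> n" by (auto simp: Ch_def)

lemma mono0_t0:
  assumes m: "2 \<le> m" and st: "standard m \<mu>"
  shows "mono0 (t0 m \<mu> ` Fs \<mu>)"
  unfolding mono0_def
proof (intro allI impI)
  fix l a b a' b'
  assume "(l, a, b) \<in> t0 m \<mu> ` Fs \<mu>" "(l, a', b') \<in> t0 m \<mu> ` Fs \<mu>" and aa: "a < a'"
  then obtain x y where x: "x \<in> Fs \<mu>" "t0 m \<mu> x = (l, a, b)" and y: "y \<in> Fs \<mu>" "t0 m \<mu> y = (l, a', b')" by auto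
  have ab: "a = fst x div 2" "b = fst x - fst x div 2" "a' = fst y div 2" "b' = fst y - fst y div 2"
    using x(2) y(2) by (auto simp: t0_eq)
  have "fst x < fst y" using aa ab by (metis div_le_mono not_le)
  then have le: "b \<le> b'" using ab by arith
  have "b \<noteq> b'"
  proof
    assume "b = b'"
    then have "Lt (t0 m \<mu> x) \<inter> Lt (t0 m \<mu> y) \<noteq> {}" using x(2) y(2) by (simp add: Lt_inter)
    then have "x = y" using t0_disjoint[OF m st x(1) y(1)] by blast
    then show False using x(2) y(2) aa by simp
  qed
  then show "b < b'" using le by simp
qed

lemma key:
  fixes g :: "nat \<times> nat \<Rightarrow> nat \<times> nat"
  assumes m: "2 \<le> m" and st: "standard m \<mu>" and g: "g \<in> PiE (Fs \<nu>) (\<lambda>x. Ch m (fst x))"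
    and T: "T0 m \<mu> \<in> Poly_Mapping.keys (rep_ev (\<Prod>x\<in>Fs \<nu>. EvT (tr x (g x)) :: 'k::comm_ring_1 ev))"
  shows "sq \<nu> \<le> sq \<mu> \<and> (sq \<nu> = sq \<mu> \<longrightarrow> \<nu> = \<mu> \<and> inj_on (\<lambda>x. tr x (g x)) (Fs \<nu>) \<and> (\<lambda>x. tr x (g x)) ` Fs \<nu> = t0 m \<mu> ` Fs \<mu>)"
proof -
  define t where "t x = tr x (g x)" for x
  have kp: "T0 m \<mu> = (\<Union>x\<in>Fs \<nu>. Lt (t x)) \<and> (\<forall>x\<in>Fs \<nu>. \<forall>y\<in>Fs \<nu>. x \<noteq> y \<longrightarrow> Lt (t x) \<inter> Lt (t y) = {})"
    using keys_prod_EvT[OF finite_Fs T] unfolding t_def by blast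
  have d0: "\<forall>x\<in>Fs \<mu>. \<forall>y\<in>Fs \<mu>. x \<noteq> y \<longrightarrow> Lt (t0 m \<mu> x) \<inter> Lt (t0 m \<mu> y) = {}"
    using t0_disjoint[OF m st] by blast
  have injt: "inj_on t (Fs \<nu>)" using kp by (intro disj_inj) blast
  have injt0: "inj_on (t0 m \<mu>) (Fs \<mu>)" using d0 by (rule disj_inj)
  have rc: "rcond (t ` Fs \<nu>) (t0 m \<mu> ` Fs \<mu>)"
    unfolding rcond_def
  proof (intro conjI)
    show "pA ` t ` Fs \<nu> = pA ` t0 m \<mu> ` Fs \<mu>" unfolding pA_image using kp by (simp add: T0_def)
    show "pB ` t ` Fs \<nu> = pB ` t0 m \<mu> ` Fs \<mu>" unfolding pB_image using kp by (simp add: T0_def)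
    show "inj_on pA (t ` Fs \<nu>)" using kp by (intro disj_injA) blast
    show "inj_on pB (t ` Fs \<nu>)" using kp by (intro disj_injB) blast
    show "inj_on pA (t0 m \<mu> ` Fs \<mu>)" using d0 by (rule disj_injA)
    show "inj_on pB (t0 m \<mu> ` Fs \<mu>)" using d0 by (rule disj_injB)
    show "mono0 (t0 m \<mu> ` Fs \<mu>)" by (rule mono0_t0[OF m st])
  qed simp_all
  have gx: "snd (g x) \<le> fst x" if "x \<in> Fs \<nu>" for x
  proof -
    have "g x \<in> Ch m (fst x)" using g that by (rule PiE_mem)
    then show ?thesis by (rule Ch_le)
  qed
  have s1: "sum wq (t ` Fs \<nu>) = sq \<nu>"
  proof -
    have "sum wq (t ` Fs \<nu>) = (\<Sum>x\<in>Fs \<nu>. wq (t x))" by (simp add: sum.reindex[OF injt])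
    also have "\<dots> = (\<Sum>x\<in>Fs \<nu>. fst x * fst x)" by (rule sum.cong) (simp_all add: t_def wq_tr gx)
    finally show ?thesis by (simp add: sq_Fs)
  qed
  have c0x: "snd (c0 m \<mu> x) \<le> fst x" for x by (simp add: c0_def)
  have s2: "sum wq (t0 m \<mu> ` Fs \<mu>) = sq \<mu>"
  proof -
    have "sum wq (t0 m \<mu> ` Fs \<mu>) = (\<Sum>x\<in>Fs \<mu>. wq (t0 m \<mu> x))" by (simp add: sum.reindex[OF injt0])
    also have "\<dots> = (\<Sum>x\<in>Fs \<mu>. fst x * fst x)" by (rule sum.cong) (simp_all add: t0_def wq_tr c0x)
    finally show ?thesis by (simp add: sq_Fs)
  qed
  have R: "sum wq (t ` Fs \<nu>) \<le> sum wq (t0 m \<mu> ` Fs \<mu>) \<and> (sum wq (t ` Fs \<nu>) = sum wq (t0 m \<mu> ` Fs \<mu>) \<longrightarrow> t ` Fs \<nu> = t0 m \<mu> ` Fs \<mu>)"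
    by (rule rearr[OF rc])
  show ?thesis
  proof (intro conjI impI)
    show "sq \<nu> \<le> sq \<mu>" using R s1 s2 by simp
    assume eq: "sq \<nu> = sq \<mu>"
    then have im: "t ` Fs \<nu> = t0 m \<mu> ` Fs \<mu>" using R s1 s2 by simp
    show "\<nu> = \<mu>"
      by (rule eq_from_images[OF injt injt0 im]) (simp_all add: t_def t0_def wq_tr gx c0x)
    show "inj_on (\<lambda>x. tr x (g x)) (Fs \<nu>)" using injt by (simp add: t_def[abs_def])
    show "(\<lambda>x. tr x (g x)) ` Fs \<nu> = t0 m \<mu> ` Fs \<mu>" using im by (simp add: t_def[abs_def])
  qed
qed

lemma lookup_rep_of_nat_mult: "Poly_Mapping.lookup (rep_ev (of_nat c * X :: 'k::comm_ring_1 ev)) T = of_nat c * Poly_Mapping.lookup (rep_ev X) T"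
  by (simp add: of_nat_ev rep_kap_mult lookup_gscal)

lemma lookup_PhiM: "Poly_Mapping.lookup (rep_ev (PhiM m \<nu> :: 'k::comm_ring_1 ev)) T =
  (\<Sum>g\<in>PiE (Fs \<nu>) (\<lambda>x. Ch m (fst x)). of_nat (cf (Fs \<nu>) g) * Poly_Mapping.lookup (rep_ev (\<Prod>x\<in>Fs \<nu>. EvT (tr x (g x)) :: 'k ev)) T)"
  by (simp add: PhiM_expand rep_ev_sum lookup_sum lookup_rep_of_nat_mult)

lemma zero_coeff:
  assumes m: "2 \<le> m" and st: "standard m \<mu>" and ne: "\<nu> \<noteq> \<mu>" and le: "sq \<mu> \<le> sq \<nu>"
  shows "Poly_Mapping.lookup (rep_ev (PhiM m \<nu> :: 'k::comm_ring_1 ev)) (T0 m \<mu>) = 0"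
  unfolding lookup_PhiM
proof (rule sum.neutral, rule ballI)
  fix g assume g: "g \<in> PiE (Fs \<nu>) (\<lambda>x. Ch m (fst x))"
  have "Poly_Mapping.lookup (rep_ev (\<Prod>x\<in>Fs \<nu>. EvT (tr x (g x)) :: 'k ev)) (T0 m \<mu>) = 0"
  proof (rule ccontr)
    assume "Poly_Mapping.lookup (rep_ev (\<Prod>x\<in>Fs \<nu>. EvT (tr x (g x)) :: 'k ev)) (T0 m \<mu>) \<noteq> 0"
    then have "T0 m \<mu> \<in> Poly_Mapping.keys (rep_ev (\<Prod>x\<in>Fs \<nu>. EvT (tr x (g x)) :: 'k ev))" by (simp add: in_keys_iff)
    from key[OF m st g this] le ne show False by simp
  qed
  then show "of_nat (cf (Fs \<nu>) g) * Poly_Mapping.lookup (rep_ev (\<Prod>x\<in>Fs \<nu>. EvT (tr x (g x)) :: 'k ev)) (T0 m \<mu>) = 0"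
    by simp
qed


lemma nonzero_coeff:
  assumes m: "2 \<le> m" and st: "standard m \<mu>"
  shows "Poly_Mapping.lookup (rep_ev (PhiM m \<mu> :: 'k::field_char_0 ev)) (T0 m \<mu>) \<noteq> 0"
proof -
  define G where "G = PiE (Fs \<mu>) (\<lambda>x. Ch m (fst x))"
  define Pg where "Pg g = (\<Prod>x\<in>Fs \<mu>. EvT (tr x (g x)) :: 'k ev)" for g
  define W where "W = (\<Prod>x\<in>Fs \<mu>. EvT (t0 m \<mu> x) :: 'k ev)"
  have d0: "\<forall>x\<in>Fs \<mu>. \<forall>y\<in>Fs \<mu>. x \<noteq> y \<longrightarrow> Lt (t0 m \<mu> x) \<inter> Lt (t0 m \<mu> y) = {}"
    using t0_disjoint[OF m st] by blast
  have injt0: "inj_on (t0 m \<mu>) (Fs \<mu>)" using d0 by (rule disj_inj)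
  obtain e :: 'k where e: "e = 1 \<or> e = -1" "rep_ev W = Poly_Mapping.single (T0 m \<mu>) e"
    using val_prod_EvT[OF finite_Fs d0] unfolding W_def T0_def by blast
  have e0: "e \<noteq> 0" using e(1) by auto
  define Good where "Good = {g\<in>G. T0 m \<mu> \<in> Poly_Mapping.keys (rep_ev (Pg g))}"
  have fG: "finite G" by (simp add: G_def finite_PiE)
  have fGood: "finite Good" using fG by (simp add: Good_def)
  have val: "Poly_Mapping.lookup (rep_ev (Pg g)) (T0 m \<mu>) = (if g \<in> Good then e else 0)" if gG: "g \<in> G" for g
  proof (cases "g \<in> Good")
    case True
    then have T: "T0 m \<mu> \<in> Poly_Mapping.keys (rep_ev (\<Prod>x\<in>Fs \<mu>. EvT (tr x (g x)) :: 'k ev))"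
      by (simp add: Good_def Pg_def)
    have k: "inj_on (\<lambda>x. tr x (g x)) (Fs \<mu>) \<and> (\<lambda>x. tr x (g x)) ` Fs \<mu> = t0 m \<mu> ` Fs \<mu>"
      using key[OF m st gG[unfolded G_def] T] by simp
    have "Pg g = (\<Prod>u\<in>(\<lambda>x. tr x (g x)) ` Fs \<mu>. EvT u)"
      unfolding Pg_def by (simp add: prod.reindex[OF conjunct1[OF k]] o_def)
    also have "\<dots> = (\<Prod>u\<in>t0 m \<mu> ` Fs \<mu>. EvT u)" using k by simp
    also have "\<dots> = W" unfolding W_def by (simp add: prod.reindex[OF injt0] o_def)
    finally show ?thesis using True e(2) by simp
  next
    case False
    then show ?thesis using gG by (simp add: Good_def in_keys_iff)
  qed
  define g0 where "g0 = restrict (c0 m \<mu>) (Fs \<mu>)"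
  have g0G: "g0 \<in> G"
    unfolding G_def g0_def using m by (auto simp: Ch_def c0_def)
  have Pg0: "Pg g0 = W" unfolding Pg_def W_def g0_def by (rule prod.cong) (simp_all add: t0_def)
  have g0Good: "g0 \<in> Good" using g0G Pg0 e(2) e0 by (simp add: Good_def)
  have cf0: "0 < cf (Fs \<mu>) g0"
    unfolding cf_def g0_def by (intro prod_pos) (simp add: c0_def)
  have "0 < cf (Fs \<mu>) g0" by (rule cf0)
  also have "cf (Fs \<mu>) g0 \<le> (\<Sum>g\<in>Good. cf (Fs \<mu>) g)" by (rule member_le_sum[OF g0Good]) (simp_all add: fGood)
  finally have spos: "0 < (\<Sum>g\<in>Good. cf (Fs \<mu>) g)" .
  have "Poly_Mapping.lookup (rep_ev (PhiM m \<mu> :: 'k ev)) (T0 m \<mu>) = (\<Sum>g\<in>G. of_nat (cf (Fs \<mu>) g) * (if g \<in> Good then e else 0))"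
    unfolding lookup_PhiM G_def[symmetric] by (rule sum.cong[OF refl]) (simp add: val[unfolded Pg_def])
  also have "\<dots> = (\<Sum>g\<in>Good. of_nat (cf (Fs \<mu>) g) * e)"
    by (rule sum.mono_neutral_cong_right) (auto simp: fG Good_def)
  also have "\<dots> = of_nat (\<Sum>g\<in>Good. cf (Fs \<mu>) g) * e" by (simp add: sum_distrib_right)
  finally have L: "Poly_Mapping.lookup (rep_ev (PhiM m \<mu> :: 'k ev)) (T0 m \<mu>) = of_nat (\<Sum>g\<in>Good. cf (Fs \<mu>) g) * e" .
  have "(of_nat (\<Sum>g\<in>Good. cf (Fs \<mu>) g) :: 'k) \<noteq> 0" using spos by (simp only: of_nat_eq_0_iff)
  then show ?thesis unfolding L using e0 by (simp only: mult_eq_0_iff de_Morgan_disj) blast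
qed

lemma lookup_hom: "Poly_Mapping.lookup (rep_ev (hom m q :: 'k::comm_ring_1 ev)) T =
   (\<Sum>\<nu>\<in>Poly_Mapping.keys q. Poly_Mapping.lookup q \<nu> * Poly_Mapping.lookup (rep_ev (PhiM m \<nu> :: 'k ev)) T)"
  by (simp add: hom_def rep_ev_sum lookup_sum rep_kap_mult lookup_gscal)

lemma indep:
  fixes q :: "'k::field_char_0 dpoly"
  assumes m: "0 < m" and qS: "q \<in> Std m" and z: "rep_ev (hom m q) = 0"
  shows "q = 0"
proof (rule ccontr)
  assume "q \<noteq> 0"
  then have ne: "Poly_Mapping.keys q \<noteq> {}" by simp
  define s where "s = Min (sq ` Poly_Mapping.keys q)"
  have "s \<in> sq ` Poly_Mapping.keys q" unfolding s_def using ne by simp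
  then obtain \<mu> where mu: "\<mu> \<in> Poly_Mapping.keys q" "sq \<mu> = s" by blast
  have minq: "sq \<mu> \<le> sq \<nu>" if "\<nu> \<in> Poly_Mapping.keys q" for \<nu>
    using mu(2) that unfolding s_def by simp
  have st: "standard m \<mu>" "\<mu> \<noteq> 0" using qS mu(1) by (auto simp: Std_def)
  have m2: "2 \<le> m"
  proof (rule ccontr)
    assume "\<not> 2 \<le> m"
    then have "m = 1" using m by simp
    then have "\<forall>a. Poly_Mapping.lookup \<mu> a = 0" using st(1) unfolding standard_def by simp
    then show False using st(2) by (simp add: poly_mapping_eqI)
  qed
  have "Poly_Mapping.lookup (rep_ev (hom m q :: 'k ev)) (T0 m \<mu>) =
     Poly_Mapping.lookup q \<mu> * Poly_Mapping.lookup (rep_ev (PhiM m \<mu> :: 'k ev)) (T0 m \<mu>)"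
    unfolding lookup_hom
  proof -
    have "(\<Sum>\<nu>\<in>Poly_Mapping.keys q - {\<mu>}. Poly_Mapping.lookup q \<nu> * Poly_Mapping.lookup (rep_ev (PhiM m \<nu> :: 'k ev)) (T0 m \<mu>)) = 0"
    proof (rule sum.neutral, rule ballI)
      fix \<nu> assume "\<nu> \<in> Poly_Mapping.keys q - {\<mu>}"
      then have "\<nu> \<noteq> \<mu>" "sq \<mu> \<le> sq \<nu>" using minq by auto
      then have "Poly_Mapping.lookup (rep_ev (PhiM m \<nu> :: 'k ev)) (T0 m \<mu>) = 0"
        by (rule zero_coeff[OF m2 st(1)])
      then show "Poly_Mapping.lookup q \<nu> * Poly_Mapping.lookup (rep_ev (PhiM m \<nu> :: 'k ev)) (T0 m \<mu>) = 0"
        by simp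
    qed
    then show "(\<Sum>\<nu>\<in>Poly_Mapping.keys q. Poly_Mapping.lookup q \<nu> * Poly_Mapping.lookup (rep_ev (PhiM m \<nu> :: 'k ev)) (T0 m \<mu>)) =
      Poly_Mapping.lookup q \<mu> * Poly_Mapping.lookup (rep_ev (PhiM m \<mu> :: 'k ev)) (T0 m \<mu>)"
      using mu(1) by (simp add: sum.remove)
  qed
  moreover have "Poly_Mapping.lookup q \<mu> \<noteq> 0" using mu(1) by (simp add: in_keys_iff)
  ultimately have "Poly_Mapping.lookup (rep_ev (hom m q :: 'k ev)) (T0 m \<mu>) \<noteq> 0"
    using nonzero_coeff[OF m2 st(1)] by simp
  then show False using z by simp
qed

lemma core:
  fixes p :: "'k::field_char_0 dpoly"
  assumes m: "0 < m" and p: "p \<in> kplus" and z: "rep_ev (hom m p) = 0"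
  shows "p \<in> diff_ideal_gen m"
proof -
  obtain q r where qr: "p = q + r" "q \<in> Std m" "r \<in> diff_ideal_gen m" using span[OF m p] by blast
  have "rep_ev (hom m r :: 'k ev) = 0" using ideal_sub_ker[OF m qr(3)] by simp
  then have "rep_ev (hom m q :: 'k ev) = 0" using z qr(1) by (simp add: hom_add plus_ev.rep_eq)
  then have "q = 0" by (rule indep[OF m qr(2)])
  then show ?thesis using qr by simp
qed

theorem lemma1:
  fixes m :: nat
  assumes "0 < m"
  shows "\<exists>\<phi> :: 'k::field_char_0 dpoly \<Rightarrow> 'k grass.
     (\<forall>p\<in>kplus. \<phi> p \<in> Lambda0 m)
   \<and> (\<forall>p\<in>kplus. \<forall>q\<in>kplus. \<phi> (p + q) = \<phi> p + \<phi> q)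
   \<and> (\<forall>c. \<forall>p\<in>kplus. \<phi> (dscal c p) = gscal c (\<phi> p))
   \<and> (\<forall>p\<in>kplus. \<forall>q\<in>kplus. \<phi> (p * q) = wedge (\<phi> p) (\<phi> q))
   \<and> (\<forall>p\<in>kplus. \<phi> (dderiv p) = gderiv shift (\<phi> p))
   \<and> \<phi> (dvar 0) = omega m
   \<and> (\<forall>p\<in>kplus. \<phi> p = 0 \<longleftrightarrow> p \<in> diff_ideal_gen m)"
proof (rule exI[of _ "\<lambda>p. rep_ev (hom m p :: 'k ev)"], intro conjI ballI allI)
  fix p :: "'k dpoly" assume p: "p \<in> kplus"
  show "rep_ev (hom m p) \<in> Lambda0 m" using p by (rule hom_Lambda0)
  { fix q :: "'k dpoly"
    show "rep_ev (hom m (p + q)) = rep_ev (hom m p) + rep_ev (hom m q)" by (simp add: hom_add plus_ev.rep_eq)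
    show "rep_ev (hom m (p * q)) = wedge (rep_ev (hom m p)) (rep_ev (hom m q))" by (simp add: hom_mult times_ev.rep_eq) }
  { fix c show "rep_ev (hom m (dscal c p)) = gscal c (rep_ev (hom m p))" by (simp add: hom_dscal rep_kap_mult) }
  show "rep_ev (hom m (dderiv p)) = gderiv shift (rep_ev (hom m p))" by (simp add: hom_dderiv D.rep_eq)
  show "(rep_ev (hom m p) = 0) = (p \<in> diff_ideal_gen m)"
    using core[OF assms p] ideal_sub_ker[OF assms, of p] by blast
next
  show "rep_ev (hom m (dvar 0) :: 'k ev) = omega m" by (simp add: hom_dvar rep_P0)
qed

end
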